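(* Assume $\rho_n:=ne^{-\zeta(d-1)R_n/2}\to c\in(0,\infty]$. Let $0<\gamma<1/2$ and $0<a<1$. Identify $x_i$ with its hyperbolic polar coordinates $(t_i,\theta_i)$, where $t_i=R_n-d(0,x_i)$ and $\theta_i\in S^{d-1}$. Then, as $n\to\infty$, $$\int_{[0,\gamma R_n]^3\times(S^{d-1})^3}\bigl[\mathbb P(D^2_{x_1,x_3}S_n^{(\gamma)}\ne0)\,\mathbb P(D^2_{x_2,x_3}S_n^{(\gamma)}\ne0)\bigr]^a\prod_{i=1}^3\bar\rho_{n,\alpha}(t_i)\,\pi(\mathrm d\theta_i)\,\mathrm dt_i=O\bigl(e^{-\zeta(d-1)(1-2\gamma)R_n}\bigr),$$ and $$\int_{[0,\gamma R_n]^2\times(S^{d-1})^2}\bigl[\mathbb P(D^2_{x_1,x_2}S_n^{(\gamma)}\ne0)\bigr]^a\prod_{i=1}^2\bar\rho_{n,\alpha}(t_i)\,\pi(\mathrm d\theta_i)\,\mathrm dt_i=O\bigl(e^{-\zeta(d-1)(1-2\gamma)R_n/2}\bigr).$$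
   Context: Fix an integer $d\ge2$ and parameters $\zeta,\alpha>0$. Geometry. The Poincaré ball $B_d^{(\zeta)}$ is the open unit ball of $\mathbb R^d$ with metric $ds^2=\frac{4}{\zeta^2}\frac{|dx|^2}{(1-|x|^2)^2}$ and hyperbolic distance $d(\cdot,\cdot)$. $R_n\to\infty$ is deterministic. For a point $x$ write $t_x=R_n-d(0,x)$. Densities. $\pi$ is the uniform probability measure on $S^{d-1}$. $\bar\rho_{n,\alpha}(t)=\sinh^{d-1}(\alpha(R_n-t))/\int_0^{R_n}\sinh^{d-1}(\alpha s)\,ds$ on $[0,R_n]$. Random points. $\mathcal P_n$ is a Poisson point process whose points $x$ have $t_x$ with density $\bar\rho_{n,\alpha}$ and direction distributed as $\pi$ independently, with total intensity $n$. Sub-tree count functional. Let $\Gamma_k$ ($k\ge2$) be a fixed tree on $[k]$ with edge set $E$. For a finite configuration $\mu$ define $$S_n^{(\gamma)}(\mu)=\sum_{(u_1,\dots,u_k)}\mathbf 1\{0<d(u_i,u_j)\le R_n\ \forall(i,j)\in E,\ t_{u_i}\le\gamma R_n\ \forall i\},$$ summed over ordered $k$-tuples of distinct points of $\mu$. Set $S_n^{(\gamma)}=S_n^{(\gamma)}(\mathcal P_n)$ and $$D^2_{x,y}S_n^{(\gamma)}=S_n^{(\gamma)}(\mathcal P_n\cup\{x,y\})-S_n^{(\gamma)}(\mathcal P_n\cup\{x\})-S_n^{(\gamma)}(\mathcal P_n\cup\{y\})+S_n^{(\gamma)}(\mathcal P_n).$$ *)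

theory Defs
  imports "HOL-Analysis.Analysis"
begin

text \<open>Hyperbolic distance in the Poincare ball of curvature minus zeta squared,
  i.e. metric 4/zeta^2 |dx|^2/(1-|x|^2)^2 on the open unit ball.\<close>
definition hdist :: "real \<Rightarrow> 'a::euclidean_space \<Rightarrow> 'a \<Rightarrow> real" where
  "hdist \<zeta> x y =
     arcosh (1 + 2 * (norm (x - y))\<^sup>2 / ((1 - (norm x)\<^sup>2) * (1 - (norm y)\<^sup>2))) / \<zeta>"

definition tcoord :: "real \<Rightarrow> real \<Rightarrow> 'a::euclidean_space \<Rightarrow> real" where
  "tcoord \<zeta> R x = R - hdist \<zeta> 0 x"

text \<open>The point with polar coordinates (t, theta): hyperbolic distance R - t from
  the origin in direction theta.\<close>
definition polar_pt :: "real \<Rightarrow> real \<Rightarrow> real \<times> 'a::euclidean_space \<Rightarrow> 'a" where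
  "polar_pt \<zeta> R u = tanh (\<zeta> * (R - fst u) / 2) *\<^sub>R snd u"

definition is_tree :: "nat \<Rightarrow> (nat \<times> nat) set \<Rightarrow> bool" where
  "is_tree k E \<longleftrightarrow> E \<subseteq> {(i, j). i < j \<and> j < k} \<and> card E = k - 1 \<and>
     (\<forall>i<k. (0, i) \<in> (E \<union> E\<inverse>)\<^sup>*)"

definition subtree_count ::
  "real \<Rightarrow> real \<Rightarrow> real \<Rightarrow> nat \<Rightarrow> (nat \<times> nat) set \<Rightarrow> 'a::euclidean_space list \<Rightarrow> nat" where
  "subtree_count \<zeta> R \<gamma> k E xs =
     card {f \<in> {..<k} \<rightarrow>\<^sub>E {..<length xs}. inj_on f {..<k} \<and>
        (\<forall>(i, j)\<in>E. 0 < hdist \<zeta> (xs ! f i) (xs ! f j) \<and> hdist \<zeta> (xs ! f i) (xs ! f j) \<le> R) \<and>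
        (\<forall>i<k. tcoord \<zeta> R (xs ! f i) \<le> \<gamma> * R)}"

definition D2 ::
  "real \<Rightarrow> real \<Rightarrow> real \<Rightarrow> nat \<Rightarrow> (nat \<times> nat) set \<Rightarrow> 'a::euclidean_space list \<Rightarrow> 'a \<Rightarrow> 'a \<Rightarrow> int" where
  "D2 \<zeta> R \<gamma> k E xs x y =
     int (subtree_count \<zeta> R \<gamma> k E (xs @ [x, y])) - int (subtree_count \<zeta> R \<gamma> k E (xs @ [x]))
     - int (subtree_count \<zeta> R \<gamma> k E (xs @ [y])) + int (subtree_count \<zeta> R \<gamma> k E xs)"

text \<open>Uniform probability measure on the unit sphere S^(d-1): radial projection of the
  uniform distribution on the unit ball.\<close>
definition sphere_unif :: "'a::euclidean_space measure" where
  "sphere_unif = distr (uniform_measure lborel (ball 0 1)) borel sgn"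

definition rho_bar :: "nat \<Rightarrow> real \<Rightarrow> real \<Rightarrow> real \<Rightarrow> real" where
  "rho_bar d \<alpha> R t = indicator {0..R} t * sinh (\<alpha> * (R - t)) ^ (d - 1) /
      integral {0..R} (\<lambda>s. sinh (\<alpha> * s) ^ (d - 1))"

definition point_law :: "real \<Rightarrow> real \<Rightarrow> real \<Rightarrow> 'a::euclidean_space measure" where
  "point_law \<zeta> \<alpha> R =
     distr (density lborel (\<lambda>t. ennreal (rho_bar DIM('a) \<alpha> R t)) \<Otimes>\<^sub>M sphere_unif) borel
       (polar_pt \<zeta> R)"

text \<open>Probability that a Poisson point process with intensity measure lam * nu
  (nu a probability measure) satisfies P: Poisson(lam) many i.i.d. nu points.\<close>
definition ppp_prob :: "real \<Rightarrow> 'a measure \<Rightarrow> ('a list \<Rightarrow> bool) \<Rightarrow> real" where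
  "ppp_prob lam \<nu> P =
     (\<Sum>m. lam ^ m / fact m * exp (- lam) *
        measure (PiM {..<m} (\<lambda>_. \<nu>))
          {\<omega> \<in> space (PiM {..<m} (\<lambda>_. \<nu>)). P (map \<omega> [0..<m])})"

definition pD2 ::
  "real \<Rightarrow> real \<Rightarrow> real \<Rightarrow> nat \<Rightarrow> (nat \<times> nat) set \<Rightarrow> nat \<Rightarrow> real \<Rightarrow> 'a::euclidean_space \<Rightarrow> 'a \<Rightarrow> real" where
  "pD2 \<zeta> \<alpha> \<gamma> k E n R x y =
     ppp_prob (real n) (point_law \<zeta> \<alpha> R) (\<lambda>xs. D2 \<zeta> R \<gamma> k E xs x y \<noteq> 0)"

definition outer_meas :: "real \<Rightarrow> real \<Rightarrow> real \<Rightarrow> (real \<times> 'a::euclidean_space) measure" where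
  "outer_meas \<alpha> \<gamma> R =
     density lborel (\<lambda>t. ennreal (indicator {0..\<gamma> * R} t * rho_bar DIM('a) \<alpha> R t))
       \<Otimes>\<^sub>M sphere_unif"

end

theory Submission
  imports Defs
begin


definition TS :: "real \<Rightarrow> real \<Rightarrow> real \<Rightarrow> nat \<Rightarrow> (nat \<times> nat) set \<Rightarrow> 'a::euclidean_space list \<Rightarrow> (nat \<Rightarrow> nat) set" where
  "TS \<zeta> R \<gamma> k E xs = {f \<in> {..<k} \<rightarrow>\<^sub>E {..<length xs}. inj_on f {..<k} \<and>
        (\<forall>(i, j)\<in>E. 0 < hdist \<zeta> (xs ! f i) (xs ! f j) \<and> hdist \<zeta> (xs ! f i) (xs ! f j) \<le> R) \<and>
        (\<forall>i<k. tcoord \<zeta> R (xs ! f i) \<le> \<gamma> * R)}"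

lemma subtree_count_TS: "subtree_count \<zeta> R \<gamma> k E xs = card (TS \<zeta> R \<gamma> k E xs)"
  unfolding subtree_count_def TS_def ..

lemma finite_TS: "finite (TS \<zeta> R \<gamma> k E xs)"
  proof -
  have "TS \<zeta> R \<gamma> k E xs \<subseteq> {..<k} \<rightarrow>\<^sub>E {..<length xs}" unfolding TS_def by auto
  then show ?thesis by (rule finite_subset) (rule finite_PiE, auto)
qed

lemma TS_prefix:
  assumes "length ys' \<le> length ys" "\<forall>j<length ys'. ys!j = ys'!j"
    and Ek: "E \<subseteq> {..<k} \<times> {..<k}"
  shows "{f \<in> TS \<zeta> R \<gamma> k E ys. f`{..<k} \<subseteq> {..<length ys'}} = TS \<zeta> R \<gamma> k E ys'"
proof (intro set_eqI iffI)
  fix f assume f: "f \<in> {f \<in> TS \<zeta> R \<gamma> k E ys. f`{..<k} \<subseteq> {..<length ys'}}"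
  then have r: "\<And>i. i < k \<Longrightarrow> f i < length ys'" by auto
  have eq: "\<And>i. i < k \<Longrightarrow> ys ! f i = ys' ! f i" using r assms(2) by auto
  have eq2: "\<And>i j. (i,j) \<in> E \<Longrightarrow> ys ! f i = ys' ! f i \<and> ys ! f j = ys' ! f j"
    using eq Ek by auto
  show "f \<in> TS \<zeta> R \<gamma> k E ys'" using f r eq eq2 unfolding TS_def
    by (auto simp: PiE_iff)
next
  fix f assume f: "f \<in> TS \<zeta> R \<gamma> k E ys'"
  then have r: "\<And>i. i < k \<Longrightarrow> f i < length ys'" unfolding TS_def by auto
  have eq: "\<And>i. i < k \<Longrightarrow> ys ! f i = ys' ! f i" using r assms(2) by auto
  have eq2: "\<And>i j. (i,j) \<in> E \<Longrightarrow> ys ! f i = ys' ! f i \<and> ys ! f j = ys' ! f j"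
    using eq Ek by auto
  have "f \<in> TS \<zeta> R \<gamma> k E ys"
    using f r eq eq2 assms(1) unfolding TS_def
    apply (simp add: PiE_iff)
    apply (auto simp: case_prod_beta intro: order_less_le_trans)
    done
  then show "f \<in> {f \<in> TS \<zeta> R \<gamma> k E ys. f`{..<k} \<subseteq> {..<length ys'}}" using r by auto
qed

lemma TS_swap_card:
  assumes Ek: "E \<subseteq> {..<k} \<times> {..<k}"
  shows "card {f \<in> TS \<zeta> R \<gamma> k E (zs @ [u, v]). length zs \<notin> f`{..<k}}
       = card {f \<in> TS \<zeta> R \<gamma> k E (zs @ [v, u]). Suc (length zs) \<notin> f`{..<k}}"
proof -
  define n where "n = length zs"
  define sw where "sw j = (if j = n then Suc n else if j = Suc n then n else j)" for j
  define h where "h f = (\<lambda>i. if i < k then sw (f i) else undefined)" for f :: "nat \<Rightarrow> nat"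
  have sw2: "sw (sw j) = j" for j unfolding sw_def by auto
  have swlt: "j < Suc (Suc n) \<Longrightarrow> sw j < Suc (Suc n)" for j unfolding sw_def by auto
  have nth1: "j < Suc (Suc n) \<Longrightarrow> (zs @ [v, u]) ! sw j = (zs @ [u, v]) ! j" for j
    unfolding sw_def n_def by (auto simp: nth_append less_Suc_eq)
  have nth2: "j < Suc (Suc n) \<Longrightarrow> (zs @ [u, v]) ! sw j = (zs @ [v, u]) ! j" for j
    unfolding sw_def n_def by (auto simp: nth_append less_Suc_eq)
  have injsw: "inj sw" by (metis injI sw2)
  have key: "h f \<in> {f \<in> TS \<zeta> R \<gamma> k E (zs @ [b, a]). sw m \<notin> f`{..<k}}"
    if f: "f \<in> {f \<in> TS \<zeta> R \<gamma> k E (zs @ [a, b]). m \<notin> f`{..<k}}"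
      and nthx: "\<And>j. j < Suc (Suc n) \<Longrightarrow> (zs @ [b, a]) ! sw j = (zs @ [a, b]) ! j"
    for f m a b
  proof -
    have fr: "i < k \<Longrightarrow> f i < Suc (Suc n)" for i using f unfolding TS_def n_def by auto
    have hf: "i < k \<Longrightarrow> (zs @ [b, a]) ! h f i = (zs @ [a, b]) ! f i" for i
      using fr nthx unfolding h_def by auto
    have hfE: "(i,j) \<in> E \<Longrightarrow> (zs @ [b, a]) ! h f i = (zs @ [a, b]) ! f i \<and> (zs @ [b, a]) ! h f j = (zs @ [a, b]) ! f j" for i j
      using hf Ek by auto
    have inj: "inj_on (h f) {..<k}"
      using f injsw unfolding TS_def h_def inj_on_def inj_def by auto
    have ext: "h f \<in> {..<k} \<rightarrow>\<^sub>E {..<length (zs @ [b, a])}"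
      using fr swlt unfolding h_def n_def by (auto simp: PiE_iff extensional_def)
    have nm: "sw m \<notin> h f ` {..<k}" using f injsw unfolding h_def inj_def by (auto simp: image_iff)
    show ?thesis using f ext inj nm hfE hf unfolding TS_def by (auto simp: case_prod_beta)
  qed
  have hh: "h (h a) = a" if "a \<in> extensional {..<k}" for a
  proof
    fix i show "h (h a) i = a i"
      using that by (cases "i < k") (auto simp: h_def sw2 extensional_def)
  qed
  have bij: "bij_betw h {f \<in> TS \<zeta> R \<gamma> k E (zs @ [u, v]). n \<notin> f`{..<k}}
                  {f \<in> TS \<zeta> R \<gamma> k E (zs @ [v, u]). Suc n \<notin> f`{..<k}}"
  proof (rule bij_betw_byWitness[where f'=h])
    show "\<forall>a\<in>{f \<in> TS \<zeta> R \<gamma> k E (zs @ [u, v]). n \<notin> f`{..<k}}. h (h a) = a"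
      using hh unfolding TS_def PiE_def by blast
    show "\<forall>a\<in>{f \<in> TS \<zeta> R \<gamma> k E (zs @ [v, u]). Suc n \<notin> f`{..<k}}. h (h a) = a"
      using hh unfolding TS_def PiE_def by blast
    show "h ` {f \<in> TS \<zeta> R \<gamma> k E (zs @ [u, v]). n \<notin> f`{..<k}} \<subseteq> {f \<in> TS \<zeta> R \<gamma> k E (zs @ [v, u]). Suc n \<notin> f`{..<k}}"
      using key[where m=n and a=u and b=v, OF _ nth1] unfolding sw_def by auto
    show "h ` {f \<in> TS \<zeta> R \<gamma> k E (zs @ [v, u]). Suc n \<notin> f`{..<k}} \<subseteq> {f \<in> TS \<zeta> R \<gamma> k E (zs @ [u, v]). n \<notin> f`{..<k}}"
      using key[where m="Suc n" and a=v and b=u, OF _ nth2] unfolding sw_def by auto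
  qed
  show ?thesis using bij_betw_same_card[OF bij] n_def by simp
qed


lemma avoid1: "(\<forall>i<k. f i < Suc (Suc n)) \<Longrightarrow> (Suc n \<notin> f`{..<k}) = (f`{..<k} \<subseteq> {..<Suc n})"
  by (auto simp: less_Suc_eq image_iff) (metis lessThan_iff less_Suc_eq)

lemma avoid2: "(\<forall>i<k. f i < Suc (Suc n)) \<Longrightarrow> (Suc n \<notin> f`{..<k} \<and> n \<notin> f`{..<k}) = (f`{..<k} \<subseteq> {..<n})"
  by (auto simp: less_Suc_eq image_iff) (metis lessThan_iff less_Suc_eq)

lemma D2_zero:
  assumes Ek: "E \<subseteq> {..<k} \<times> {..<k}"
    and H: "\<forall>f\<in>TS \<zeta> R \<gamma> k E (xs @ [x, y]). \<not> (length xs \<in> f`{..<k} \<and> Suc (length xs) \<in> f`{..<k})"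
  shows "D2 \<zeta> R \<gamma> k E xs x y = 0"
proof -
  define n where "n = length xs"
  define T2 where "T2 = TS \<zeta> R \<gamma> k E (xs @ [x, y])"
  define A where "A = {f \<in> T2. Suc n \<notin> f`{..<k}}"
  define B where "B = {f \<in> T2. n \<notin> f`{..<k}}"
  have fr: "f \<in> T2 \<Longrightarrow> i < k \<Longrightarrow> f i < Suc (Suc n)" for f i unfolding T2_def TS_def n_def by auto
  have U: "T2 = A \<union> B" using H unfolding A_def B_def T2_def n_def by auto
  have A_eq: "A = TS \<zeta> R \<gamma> k E (xs @ [x])"
  proof -
    have "A = {f \<in> T2. f`{..<k} \<subseteq> {..<length (xs @ [x])}}"
      unfolding A_def using avoid1 fr by (simp add: n_def) blast
    also have "\<dots> = TS \<zeta> R \<gamma> k E (xs @ [x])" unfolding T2_def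
      by (rule TS_prefix[OF _ _ Ek]) (auto simp: nth_append)
    finally show ?thesis .
  qed
  have AB_eq: "A \<inter> B = TS \<zeta> R \<gamma> k E xs"
  proof -
    have "A \<inter> B = {f \<in> T2. f`{..<k} \<subseteq> {..<length xs}}"
      unfolding A_def B_def using avoid2 fr by (simp add: n_def) blast
    also have "\<dots> = TS \<zeta> R \<gamma> k E xs" unfolding T2_def
      by (rule TS_prefix[OF _ _ Ek]) (auto simp: nth_append)
    finally show ?thesis .
  qed
  have B_card: "card B = card (TS \<zeta> R \<gamma> k E (xs @ [y]))"
  proof -
    have "card B = card {f \<in> TS \<zeta> R \<gamma> k E (xs @ [y, x]). Suc n \<notin> f`{..<k}}"
      unfolding B_def T2_def n_def by (rule TS_swap_card[OF Ek])
    also have "{f \<in> TS \<zeta> R \<gamma> k E (xs @ [y, x]). Suc n \<notin> f`{..<k}}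
       = {f \<in> TS \<zeta> R \<gamma> k E (xs @ [y, x]). f`{..<k} \<subseteq> {..<length (xs @ [y])}}"
      using avoid1[of k _ n] unfolding n_def TS_def by (simp add: PiE_iff) blast
    also have "\<dots> = TS \<zeta> R \<gamma> k E (xs @ [y])"
      by (rule TS_prefix[OF _ _ Ek]) (auto simp: nth_append)
    finally show ?thesis .
  qed
  have fin: "finite A" "finite B" unfolding A_def B_def T2_def by (auto intro: rev_finite_subset[OF finite_TS])
  have "card A + card B = card (A \<union> B) + card (A \<inter> B)" by (rule card_Un_Int[OF fin])
  then have c: "card T2 + card (A \<inter> B) = card A + card B" by (simp only: U)
  have ci: "int (card T2) + int (card (A \<inter> B)) = int (card A) + int (card B)"
    using arg_cong[OF c, of int] by (simp only: of_nat_add)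
  show ?thesis unfolding D2_def subtree_count_TS T2_def[symmetric] A_eq[symmetric] AB_eq[symmetric] B_card[symmetric]
    using ci by linarith
qed


lemma cosh_le_exp: "x \<ge> 0 \<Longrightarrow> cosh (x::real) \<le> exp x"
  by (simp add: cosh_field_def)

lemma exp_le_2cosh: "exp (x::real) \<le> 2 * cosh x"
  by (simp add: cosh_field_def)

lemma q_bound:
  fixes u :: "'a::euclidean_space"
  assumes z: "\<zeta> > 0" and u: "norm u < 1" and D: "hdist \<zeta> 0 u \<ge> L"
  shows "1 - (norm u)\<^sup>2 \<le> 4 * exp (- \<zeta> * L)"
proof -
  define q where "q = 1 - (norm u)\<^sup>2"
  have q: "0 < q" "q \<le> 1" unfolding q_def using u by (auto simp: abs_square_less_1)
  define A where "A = 1 + 2 * (norm u)\<^sup>2 / q"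
  have A1: "A \<ge> 1" unfolding A_def using q by auto
  have hd: "hdist \<zeta> 0 u = arcosh A / \<zeta>" unfolding hdist_def A_def q_def by simp
  have "\<zeta> * L \<le> arcosh A" using D hd z by (simp add: field_simps)
  then have "exp (\<zeta> * L) \<le> exp (arcosh A)" by simp
  also have "\<dots> \<le> 2 * cosh (arcosh A)" by (rule exp_le_2cosh)
  also have "\<dots> = 2 * A" using A1 by simp
  finally have e: "exp (\<zeta> * L) \<le> 2 * A" .
  have "A * q = 1 + (norm u)\<^sup>2" unfolding A_def using q by (simp add: field_simps q_def)
  also have "\<dots> \<le> 2" using u by (smt (verit) norm_ge_zero power_le_one)
  finally have Aq: "A * q \<le> 2" .
  have "exp (\<zeta> * L) * q \<le> (2 * A) * q" using e q by (intro mult_right_mono) auto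
  then have "exp (\<zeta> * L) * q \<le> 4" using Aq by simp
  then have "q \<le> 4 / exp (\<zeta> * L)" by (simp add: field_simps)
  then show ?thesis unfolding q_def by (simp add: exp_minus field_simps)
qed

lemma sgn_dist: "norm (u::'a::real_normed_vector) \<le> 1 \<Longrightarrow> norm (sgn u - u) \<le> 1 - (norm u)\<^sup>2"
proof (cases "u = 0")
  case False
  assume n: "norm u \<le> 1"
  have "sgn u - u = (1 / norm u - 1) *\<^sub>R u" by (simp add: sgn_div_norm algebra_simps divide_inverse)
  then have "norm (sgn u - u) = \<bar>1 / norm u - 1\<bar> * norm u" by simp
  also have "\<dots> = 1 - norm u" using False n by (simp add: field_simps)
  also have "\<dots> \<le> 1 - (norm u)\<^sup>2" using n by (simp add: power2_eq_square mult_left_le)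
  finally show ?thesis .
qed simp

lemma geom:
  fixes u v :: "'a::euclidean_space"
  assumes z: "\<zeta> > 0" and u: "norm u < 1" and v: "norm v < 1"
    and d: "hdist \<zeta> u v \<le> R" and tu: "tcoord \<zeta> R u \<le> \<gamma> * R" and tv: "tcoord \<zeta> R v \<le> \<gamma> * R"
    and g: "0 < \<gamma>" "\<gamma> < 1/2" and R: "R > 0"
  shows "norm (sgn u - sgn v) \<le> 11 * exp (- \<zeta> * (1 - 2 * \<gamma>) * R / 2)"
proof -
  define E where "E = exp (- \<zeta> * (1 - 2 * \<gamma>) * R / 2)"
  have Epos: "E > 0" unfolding E_def by simp
  have Du: "hdist \<zeta> 0 u \<ge> (1 - \<gamma>) * R" using tu unfolding tcoord_def by (simp add: algebra_simps)
  have Dv: "hdist \<zeta> 0 v \<ge> (1 - \<gamma>) * R" using tv unfolding tcoord_def by (simp add: algebra_simps)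
  have qu: "1 - (norm u)\<^sup>2 \<le> 4 * exp (- \<zeta> * ((1 - \<gamma>) * R))" by (rule q_bound[OF z u Du])
  have qv: "1 - (norm v)\<^sup>2 \<le> 4 * exp (- \<zeta> * ((1 - \<gamma>) * R))" by (rule q_bound[OF z v Dv])
  have eE: "exp (- \<zeta> * ((1 - \<gamma>) * R)) \<le> E" unfolding E_def
    using z g R by (simp add: mult_left_mono mult_right_mono algebra_simps)
  define qU where "qU = 1 - (norm u)\<^sup>2"
  define qV where "qV = 1 - (norm v)\<^sup>2"
  have qUp: "qU > 0" unfolding qU_def using u by (auto simp: abs_square_less_1)
  have qVp: "qV > 0" unfolding qV_def using v by (auto simp: abs_square_less_1)
  define X where "X = 1 + 2 * (norm (u - v))\<^sup>2 / (qU * qV)"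
  have X1: "X \<ge> 1" unfolding X_def using qUp qVp by auto
  have "arcosh X \<le> \<zeta> * R" using d z unfolding hdist_def X_def qU_def qV_def by (simp add: field_simps)
  then have "cosh (arcosh X) \<le> cosh (\<zeta> * R)"
    using X1 z R by (subst cosh_real_nonneg_le_iff) auto
  also have "\<dots> \<le> exp (\<zeta> * R)" using z R by (intro cosh_le_exp) simp
  finally have "X \<le> exp (\<zeta> * R)" using X1 by simp
  then have "2 * (norm (u - v))\<^sup>2 / (qU * qV) \<le> exp (\<zeta> * R)" unfolding X_def by simp
  then have uv1: "2 * (norm (u - v))\<^sup>2 \<le> exp (\<zeta> * R) * (qU * qV)" using qUp qVp by (simp add: field_simps)
  have "qU * qV \<le> (4 * exp (- \<zeta> * ((1 - \<gamma>) * R))) * (4 * exp (- \<zeta> * ((1 - \<gamma>) * R)))"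
    using qu qv qUp qVp unfolding qU_def qV_def by (intro mult_mono) auto
  also have "\<dots> = 16 * exp (- 2 * \<zeta> * ((1 - \<gamma>) * R))" by (simp add: exp_add[symmetric] algebra_simps)
  finally have "exp (\<zeta> * R) * (qU * qV) \<le> exp (\<zeta> * R) * (16 * exp (- 2 * \<zeta> * ((1 - \<gamma>) * R)))"
    by simp
  also have "\<dots> = 16 * E\<^sup>2" unfolding E_def
    by (simp add: power2_eq_square exp_add[symmetric] algebra_simps)
  finally have "(norm (u - v))\<^sup>2 \<le> (3 * E)\<^sup>2" using uv1
    by (simp add: power2_eq_square) (smt (verit) mult_nonneg_nonneg Epos)
  then have uv: "norm (u - v) \<le> 3 * E"
  proof (rule power2_le_imp_le)
    show "0 \<le> 3 * E" using Epos by simp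
  qed
  have su: "norm (sgn u - u) \<le> 4 * E" using sgn_dist[of u] u qu eE by linarith
  have sv: "norm (sgn v - v) \<le> 4 * E" using sgn_dist[of v] v qv eE by linarith
  have "norm (sgn u - v) \<le> 4 * E + 3 * E" by (rule norm_diff_triangle_le[OF su uv])
  moreover have "norm (v - sgn v) \<le> 4 * E" using sv by (simp add: norm_minus_commute)
  ultimately have "norm (sgn u - sgn v) \<le> (4 * E + 3 * E) + 4 * E" by (rule norm_diff_triangle_le)
  then have "norm (sgn u - sgn v) \<le> 11 * E" by simp
  then show ?thesis unfolding E_def .
qed


lemma path_bound:
  fixes p :: "nat \<Rightarrow> 'a::real_normed_vector"
  assumes e: "\<And>i j. (i, j) \<in> S \<Longrightarrow> norm (p i - p j) \<le> d"
  shows "(a, b) \<in> S ^^ l \<Longrightarrow> norm (p a - p b) \<le> real l * d"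
proof (induction l arbitrary: b)
  case 0 then show ?case by simp
next
  case (Suc l)
  then obtain c where c: "(a, c) \<in> S ^^ l" "(c, b) \<in> S" by auto
  have "norm (p a - p b) \<le> real l * d + d"
    by (rule norm_diff_triangle_le[OF Suc.IH[OF c(1)] e[OF c(2)]])
  then show ?case by (simp add: algebra_simps)
qed

lemma tree_bound:
  fixes p :: "nat \<Rightarrow> 'a::real_normed_vector"
  assumes tree: "is_tree k E" and k: "k \<ge> 2"
    and e: "\<And>i j. (i, j) \<in> E \<Longrightarrow> norm (p i - p j) \<le> d" and d: "d \<ge> 0"
    and i: "i < k" and j: "j < k"
  shows "norm (p i - p j) \<le> 4 * real k * d"
proof -
  define S where "S = E \<union> E\<inverse>"
  have cE: "card E = k - 1" using tree unfolding is_tree_def by auto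
  have "card E \<noteq> 0" using cE k by simp
  then have finE: "finite E" by (meson card.infinite)
  have finS: "finite S" unfolding S_def using finE by auto
  have cS: "card S \<le> 2 * (k - 1)"
  proof -
    have "card S \<le> card E + card (E\<inverse>)" unfolding S_def by (rule card_Un_le)
    then show ?thesis using cE by (simp add: card_inverse)
  qed
  have eS: "\<And>a b. (a, b) \<in> S \<Longrightarrow> norm (p a - p b) \<le> d"
    unfolding S_def using e by (auto, metis norm_minus_commute)
  have bnd: "norm (p a - p b) \<le> real (2 * (k - 1)) * d" if "(a, b) \<in> S\<^sup>*" for a b
  proof -
    from that obtain l where l: "l \<le> card S" "(a, b) \<in> S ^^ l"
      using rtrancl_finite_eq_relpow[OF finS] by auto
    have "norm (p a - p b) \<le> real l * d" by (rule path_bound[OF eS l(2)])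
    also have "\<dots> \<le> real (2 * (k - 1)) * d" using l(1) cS d by (intro mult_right_mono) auto
    finally show ?thesis .
  qed
  have ci: "(0, i) \<in> S\<^sup>*" "(0, j) \<in> S\<^sup>*" using tree i j unfolding is_tree_def S_def by auto
  have "norm (p i - p j) \<le> real (2 * (k - 1)) * d + real (2 * (k - 1)) * d"
  proof (rule norm_diff_triangle_le)
    show "norm (p i - p 0) \<le> real (2 * (k - 1)) * d" using bnd[OF ci(1)] by (simp add: norm_minus_commute)
    show "norm (p 0 - p j) \<le> real (2 * (k - 1)) * d" using bnd[OF ci(2)] .
  qed
  also have "\<dots> = (4 * real (k - 1)) * d" by simp
  also have "\<dots> \<le> (4 * real k) * d" using d by (intro mult_right_mono) auto
  finally show ?thesis .
qed

lemma D2_far: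
  fixes xs :: "'a::euclidean_space list"
  assumes tree: "is_tree k E" and k: "k \<ge> 2" and z: "\<zeta> > 0" and g: "0 < \<gamma>" "\<gamma> < 1/2" and R: "R > 0"
    and pts: "\<forall>w\<in>set xs. norm w < 1" and x: "norm x < 1" and y: "norm y < 1"
    and far: "norm (sgn x - sgn y) > 4 * real k * (11 * exp (- \<zeta> * (1 - 2 * \<gamma>) * R / 2))"
  shows "D2 \<zeta> R \<gamma> k E xs x y = 0"
proof (rule D2_zero)
  show Ek: "E \<subseteq> {..<k} \<times> {..<k}" using tree unfolding is_tree_def by auto
  show "\<forall>f\<in>TS \<zeta> R \<gamma> k E (xs @ [x, y]). \<not> (length xs \<in> f`{..<k} \<and> Suc (length xs) \<in> f`{..<k})"
  proof (intro ballI notI)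
    fix f assume f: "f \<in> TS \<zeta> R \<gamma> k E (xs @ [x, y])"
      and h: "length xs \<in> f`{..<k} \<and> Suc (length xs) \<in> f`{..<k}"
    define ys where "ys = xs @ [x, y]"
    define p where "p i = sgn (ys ! f i)" for i
    from h obtain i0 j0 where ij: "i0 < k" "j0 < k" "f i0 = length xs" "f j0 = Suc (length xs)" by force
    have fr: "i < k \<Longrightarrow> f i < length ys" for i using f unfolding TS_def ys_def by auto
    have nrm: "i < k \<Longrightarrow> norm (ys ! f i) < 1" for i
    proof -
      assume "i < k"
      then have "ys ! f i \<in> set ys" using fr by auto
      then show ?thesis using pts x y unfolding ys_def by auto
    qed
    have tc: "i < k \<Longrightarrow> tcoord \<zeta> R (ys ! f i) \<le> \<gamma> * R" for i using f unfolding TS_def ys_def by auto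
    have e: "norm (p i - p j) \<le> 11 * exp (- \<zeta> * (1 - 2 * \<gamma>) * R / 2)" if "(i, j) \<in> E" for i j
    proof -
      have ik: "i < k" "j < k" using that Ek by auto
      have "hdist \<zeta> (ys ! f i) (ys ! f j) \<le> R" using f that unfolding TS_def ys_def by auto
      then show ?thesis unfolding p_def
        by (rule geom[OF z nrm[OF ik(1)] nrm[OF ik(2)] _ tc[OF ik(1)] tc[OF ik(2)] g R])
    qed
    have en: "\<And>t. 0 \<le> 11 * exp (t::real)" by simp
    have "norm (p i0 - p j0) \<le> 4 * real k * (11 * exp (- \<zeta> * (1 - 2 * \<gamma>) * R / 2))"
      by (rule tree_bound[OF tree k]) (use e en ij in auto)
    moreover have "p i0 = sgn x" "p j0 = sgn y" unfolding p_def ys_def using ij by (auto simp: nth_append)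
    ultimately show False using far by simp
  qed
qed


lemma rho_meas [measurable]: "(\<lambda>t. rho_bar d \<alpha> R t) \<in> borel_measurable borel"
proof -
  have [measurable]: "(\<lambda>t. sinh (\<alpha> * (R - t)) ^ (d - 1)) \<in> borel_measurable borel"
    by (intro borel_measurable_continuous_onI continuous_intros)
  show ?thesis unfolding rho_bar_def by measurable
qed

lemma rho_nonneg: assumes "\<alpha> > 0" shows "rho_bar d \<alpha> R t \<ge> 0"
proof -
  have "integral {0..R} (\<lambda>s. sinh (\<alpha> * s) ^ (d - 1)) \<ge> 0"
    using assms by (intro integral_nonneg integrable_continuous_interval) (auto intro!: continuous_intros)
  moreover have "indicator {0..R} t * sinh (\<alpha> * (R - t)) ^ (d - 1) \<ge> 0"
    using assms by (auto simp: indicator_def)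
  ultimately show ?thesis unfolding rho_bar_def by simp
qed

lemma rho_mass:
  assumes a: "\<alpha> > 0"
  shows "(\<integral>\<^sup>+t. ennreal (rho_bar d \<alpha> R t) \<partial>lborel) \<le> 1"
proof -
  define g where "g = (\<lambda>s. sinh (\<alpha> * s) ^ (d - 1))"
  define I where "I = integral {0..R} g"
  have gc: "continuous_on {0..R} g" unfolding g_def by (auto intro!: continuous_intros)
  have gnn: "s \<ge> 0 \<Longrightarrow> g s \<ge> 0" for s unfolding g_def using a by auto
  have Inn: "I \<ge> 0" unfolding I_def using gnn
    by (intro integral_nonneg integrable_continuous_interval gc) auto
  show ?thesis
  proof (cases "I = 0")
    case True
    then have "rho_bar d \<alpha> R t = 0" for t unfolding rho_bar_def I_def g_def by simp
    then show ?thesis by simp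
  next
    case False
    with Inn have Ipos: "I > 0" by simp
    have "(\<integral>\<^sup>+t. ennreal (rho_bar d \<alpha> R t) \<partial>lborel)
        = (\<integral>\<^sup>+x. ennreal (rho_bar d \<alpha> R (R - x)) \<partial>lborel)"
      using nn_integral_real_affine[where c="-1" and t=R and f="\<lambda>t. ennreal (rho_bar d \<alpha> R t)"] by simp
    also have "\<dots> = (\<integral>\<^sup>+x. ennreal (g x / I) * indicator {0..R} x \<partial>lborel)"
      by (intro nn_integral_cong) (auto simp: rho_bar_def g_def I_def indicator_def)
    also have "\<dots> = ennreal (I / I)"
    proof (rule nn_integral_has_integral_lebesgue')
      show "\<And>x. x \<in> {0..R} \<Longrightarrow> 0 \<le> g x / I" using gnn Ipos by auto
      have "(g has_integral I) {0..R}" unfolding I_def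
        by (rule integrable_integral[OF integrable_continuous_interval[OF gc]])
      then show "((\<lambda>x. g x / I) has_integral I / I) {0..R}" by (rule has_integral_divide)
    qed
    also have "\<dots> = 1" using Ipos by simp
    finally show ?thesis by simp
  qed
qed

lemma ball_meas_aux: "emeasure lborel (ball (0::'a::euclidean_space) 1) = ennreal (unit_ball_vol (real DIM('a)))"
  by (simp add: emeasure_ball)

lemma ball_meas: "emeasure lborel (ball (0::'a::euclidean_space) 1) \<noteq> 0"
  "emeasure lborel (ball (0::'a::euclidean_space) 1) \<noteq> \<infinity>"
proof -
  have p: "unit_ball_vol (real DIM('a)) > 0" by (rule unit_ball_vol_pos) simp
  show "emeasure lborel (ball (0::'a::euclidean_space) 1) \<noteq> 0"
    unfolding ball_meas_aux using p by (metis ennreal_eq_0_iff less_le_not_le)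
  show "emeasure lborel (ball (0::'a::euclidean_space) 1) \<noteq> \<infinity>"
    unfolding ball_meas_aux by simp
qed

lemma sets_sphere [measurable_cong, simp]: "sets (sphere_unif :: 'a::euclidean_space measure) = sets borel"
  unfolding sphere_unif_def by simp

lemma space_sphere [simp]: "space (sphere_unif :: 'a::euclidean_space measure) = UNIV"
  unfolding sphere_unif_def by simp

lemma sphere_UNIV: "emeasure (sphere_unif :: 'a::euclidean_space measure) UNIV = 1"
proof -
  have "emeasure (sphere_unif :: 'a measure) UNIV = emeasure (uniform_measure lborel (ball (0::'a) 1)) UNIV"
    unfolding sphere_unif_def by (subst emeasure_distr) auto
  also have "\<dots> = 1" using ball_meas[where 'a='a]
    by (subst emeasure_uniform_measure) (auto simp: ennreal_divide_self less_top)
  finally show ?thesis .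
qed

lemma norm_sgn_scale: "norm w *\<^sub>R sgn w = (w::'a::real_normed_vector)"
  by (cases "w = 0") (auto simp: sgn_div_norm)

lemma sgn_sgn_vec [simp]: "sgn (sgn w) = sgn (w::'a::real_normed_vector)"
  by (cases "w = 0") (simp_all add: sgn_div_norm[of "sgn w"] norm_sgn)

lemma cap_cover:
  fixes w \<theta>0 :: "'a::euclidean_space"
  assumes w: "norm w < 1" and c: "norm (sgn w - \<theta>0) \<le> \<delta>" and d: "\<delta> > 0" and t: "norm \<theta>0 \<le> 2"
  shows "w \<in> (\<Union>i\<in>{..nat \<lfloor>1/\<delta>\<rfloor>}. cball ((real i * \<delta>) *\<^sub>R \<theta>0) (3 * \<delta>))"
proof -
  define s where "s = norm w"
  define i where "i = nat \<lfloor>s / \<delta>\<rfloor>"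
  have s: "0 \<le> s" "s < 1" using w unfolding s_def by auto
  have fl: "real i \<le> s / \<delta>" "s / \<delta> < real i + 1" unfolding i_def using s d
    by (auto simp: of_nat_nat)
  have ri: "real i * \<delta> \<le> s" "s - real i * \<delta> < \<delta>" using fl d by (auto simp: field_simps)
  have iN: "i \<le> nat \<lfloor>1/\<delta>\<rfloor>" unfolding i_def using s d
    by (intro nat_mono floor_mono) (auto simp: divide_right_mono)
  have "w - (real i * \<delta>) *\<^sub>R \<theta>0 = s *\<^sub>R (sgn w - \<theta>0) + (s - real i * \<delta>) *\<^sub>R \<theta>0"
    unfolding s_def by (simp add: algebra_simps norm_sgn_scale)
  then have "norm (w - (real i * \<delta>) *\<^sub>R \<theta>0) \<le> norm (s *\<^sub>R (sgn w - \<theta>0)) + norm ((s - real i * \<delta>) *\<^sub>R \<theta>0)"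
    by (metis norm_triangle_ineq)
  also have "\<dots> = s * norm (sgn w - \<theta>0) + (s - real i * \<delta>) * norm \<theta>0" using s ri by simp
  also have "\<dots> \<le> 1 * \<delta> + \<delta> * 2"
    using s ri c t by (intro add_mono mult_mono) auto
  finally have "dist ((real i * \<delta>) *\<^sub>R \<theta>0) w \<le> 3 * \<delta>" by (simp add: dist_norm norm_minus_commute)
  then have "w \<in> cball ((real i * \<delta>) *\<^sub>R \<theta>0) (3 * \<delta>)" by (simp add: dist_commute)
  then show ?thesis using iN by blast
qed

lemma cap_bound:
  fixes \<theta>0 :: "'a::euclidean_space"
  assumes d: "\<delta> > 0"
  shows "emeasure (sphere_unif :: 'a measure) {\<theta>. norm (sgn \<theta> - \<theta>0) \<le> \<delta>}
           \<le> ennreal (2 * 3 ^ DIM('a) * \<delta> ^ (DIM('a) - 1))"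
proof -
  define C where "C = {\<theta>::'a. norm (sgn \<theta> - \<theta>0) \<le> \<delta>}"
  define D where "D = DIM('a)"
  have D1: "D \<ge> 1" unfolding D_def by (simp add: DIM_positive Suc_leI)
  have Cm: "C \<in> sets borel" unfolding C_def by measurable
  have le1: "emeasure (sphere_unif :: 'a measure) C \<le> 1"
    using emeasure_mono[of C UNIV sphere_unif] sphere_UNIV[where 'a='a] by simp
  show ?thesis
  proof (cases "\<delta> \<ge> 1 \<or> norm \<theta>0 > 2")
    case True
    show ?thesis
    proof (cases "\<delta> \<ge> 1")
      case True
      have "1 \<le> (3::real) ^ D" by simp
      moreover have "1 \<le> \<delta> ^ (D - 1)" using True by simp
      ultimately have "1 * 1 \<le> 3 ^ D * \<delta> ^ (D - 1)"
        by (intro mult_mono) auto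
      then have "1 \<le> 2 * 3 ^ D * \<delta> ^ (D - 1)" by simp
      then have "(1::ennreal) \<le> ennreal (2 * 3 ^ D * \<delta> ^ (D - 1))"
        by (metis ennreal_1 ennreal_leI)
      then show ?thesis using le1 unfolding C_def D_def by (meson order_trans)
    next
      case False
      with \<open>\<delta> \<ge> 1 \<or> norm \<theta>0 > 2\<close> have t: "norm \<theta>0 > 2" "\<delta> < 1" by auto
      have "C = {}"
      proof (rule ccontr)
        assume "C \<noteq> {}"
        then obtain \<theta> where th: "norm (sgn \<theta> - \<theta>0) \<le> \<delta>" unfolding C_def by auto
        have "norm \<theta>0 \<le> norm (sgn \<theta>) + norm (sgn \<theta> - \<theta>0)" by (metis norm_triangle_sub add.commute norm_minus_commute)
        moreover have "norm (sgn \<theta>) \<le> 1" by (simp add: norm_sgn)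
        ultimately show False using th t by linarith
      qed
      then show ?thesis unfolding C_def by simp
    qed
  next
    case False
    then have d1: "\<delta> < 1" and t: "norm \<theta>0 \<le> 2" by auto
    define N where "N = nat \<lfloor>1/\<delta>\<rfloor>"
    define V where "V = unit_ball_vol (real D)"
    have Vp: "V > 0" unfolding V_def by (rule unit_ball_vol_pos) simp
    have ballV: "emeasure lborel (ball (0::'a) 1) = ennreal V" unfolding V_def D_def by (simp add: emeasure_ball)
    have "emeasure (sphere_unif :: 'a measure) C = emeasure (uniform_measure lborel (ball (0::'a) 1)) (sgn -` C)"
      unfolding sphere_unif_def using Cm by (subst emeasure_distr) auto
    also have "\<dots> = emeasure lborel (ball 0 1 \<inter> sgn -` C) / emeasure lborel (ball (0::'a) 1)"
      using Cm by (subst emeasure_uniform_measure) (auto intro: measurable_sets_borel[OF borel_measurable_sgn])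
    also have "\<dots> \<le> emeasure lborel (\<Union>i\<in>{..N}. cball ((real i * \<delta>) *\<^sub>R \<theta>0) (3 * \<delta>)) / ennreal V"
      unfolding ballV
    proof (intro divide_right_mono_ennreal emeasure_mono)
      show "ball 0 1 \<inter> sgn -` C \<subseteq> (\<Union>i\<in>{..N}. cball ((real i * \<delta>) *\<^sub>R \<theta>0) (3 * \<delta>))"
      proof
        fix w assume "w \<in> ball 0 1 \<inter> sgn -` C"
        then have "norm w < 1" "norm (sgn w - \<theta>0) \<le> \<delta>" unfolding C_def by auto
        then show "w \<in> (\<Union>i\<in>{..N}. cball ((real i * \<delta>) *\<^sub>R \<theta>0) (3 * \<delta>))"
          unfolding N_def by (rule cap_cover[OF _ _ d t])
      qed
      show "(\<Union>i\<in>{..N}. cball ((real i * \<delta>) *\<^sub>R \<theta>0) (3 * \<delta>)) \<in> sets lborel"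
        by (intro sets.finite_UN) auto
    qed
    also have "\<dots> \<le> (\<Sum>i\<in>{..N}. emeasure lborel (cball ((real i * \<delta>) *\<^sub>R \<theta>0) (3 * \<delta>))) / ennreal V"
      by (intro divide_right_mono_ennreal emeasure_subadditive_finite) (auto simp del: sets_lborel)
    also have "\<dots> = ennreal (real (Suc N) * (V * (3 * \<delta>) ^ D)) / ennreal V"
      using d by (simp add: emeasure_cball V_def D_def ennreal_of_nat_eq_real_of_nat ennreal_mult)
    also have "\<dots> = ennreal (real (Suc N) * (V * (3 * \<delta>) ^ D) / V)"
      using Vp d by (intro divide_ennreal) auto
    also have "\<dots> = ennreal (real (Suc N) * (3 * \<delta>) ^ D)"
      using Vp by simp
    also have "\<dots> \<le> ennreal (2 * 3 ^ D * \<delta> ^ (D - 1))"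
    proof (rule ennreal_leI)
      have "real N \<le> 1 / \<delta>" unfolding N_def using d by (simp add: of_nat_nat)
      then have "real (Suc N) \<le> 2 / \<delta>" using d d1 by (simp add: field_simps)
      then have "real (Suc N) * (3 * \<delta>) ^ D \<le> (2 / \<delta>) * (3 * \<delta>) ^ D"
        using d by (intro mult_right_mono) auto
      also have "\<dots> = 2 * 3 ^ D * \<delta> ^ (D - 1)"
      proof -
        have "\<delta> ^ D = \<delta> * \<delta> ^ (D - 1)" using D1 by (metis power_eq_if not_one_le_zero)
        then show ?thesis using d by (simp add: power_mult_distrib field_simps)
      qed
      finally show "real (Suc N) * (3 * \<delta>) ^ D \<le> 2 * 3 ^ D * \<delta> ^ (D - 1)" .
    qed
    finally show ?thesis unfolding C_def D_def .
  qed
qed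


lemma tanh_meas [measurable]: "(\<lambda>t::real. tanh (\<zeta> * (R - t) / 2)) \<in> borel_measurable borel"
proof -
  have "continuous_on UNIV (\<lambda>t::real. tanh (\<zeta> * (R - t) / 2))"
    by (intro continuous_on_tanh continuous_intros) (auto simp: cosh_real_pos[THEN less_imp_neq, symmetric])
  then show ?thesis by (rule borel_measurable_continuous_onI)
qed

lemma polar_meas [measurable]:
  assumes [measurable_cong]: "sets M = sets (borel :: real measure)" "sets N = sets (borel :: 'a::euclidean_space measure)"
  shows "polar_pt \<zeta> R \<in> borel_measurable (M \<Otimes>\<^sub>M N)"
  unfolding polar_pt_def by measurable

lemma dens_mass:
  assumes a: "\<alpha> > 0"
  shows "emeasure (density lborel (\<lambda>t. ennreal (rho_bar d \<alpha> R t))) UNIV \<le> 1"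
  using rho_mass[OF a, of d R] by (simp add: emeasure_density)

lemma finite_sphere: "finite_measure (sphere_unif :: 'a::euclidean_space measure)"
  by (rule finite_measureI) (simp add: sphere_UNIV)

lemma finite_dens:
  assumes a: "\<alpha> > 0"
  shows "finite_measure (density lborel (\<lambda>t. ennreal (rho_bar d \<alpha> R t)))"
  by (rule finite_measureI) (use dens_mass[OF a, of d R] in \<open>auto simp: top_unique\<close>)

lemma point_law_UNIV:
  assumes a: "\<alpha> > 0"
  shows "emeasure (point_law \<zeta> \<alpha> R :: 'a::euclidean_space measure) UNIV \<le> 1"
proof -
  interpret S: finite_measure "sphere_unif :: 'a measure" by (rule finite_sphere)
  have "emeasure (point_law \<zeta> \<alpha> R :: 'a measure) UNIV
     = emeasure (density lborel (\<lambda>t. ennreal (rho_bar DIM('a) \<alpha> R t)) \<Otimes>\<^sub>M (sphere_unif :: 'a measure)) (UNIV \<times> UNIV)"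
    unfolding point_law_def by (subst emeasure_distr) (auto simp: space_pair_measure)
  also have "\<dots> = emeasure (density lborel (\<lambda>t. ennreal (rho_bar DIM('a) \<alpha> R t))) UNIV * emeasure (sphere_unif :: 'a measure) UNIV"
    by (rule S.emeasure_pair_measure_Times) auto
  also have "\<dots> \<le> 1" using dens_mass[OF a, of "DIM('a)" R] by (simp add: sphere_UNIV)
  finally show ?thesis .
qed

lemma sets_point_law [measurable_cong, simp]: "sets (point_law \<zeta> \<alpha> R :: 'a::euclidean_space measure) = sets borel"
  unfolding point_law_def by simp

lemma space_point_law [simp]: "space (point_law \<zeta> \<alpha> R :: 'a::euclidean_space measure) = UNIV"
  unfolding point_law_def by simp

lemma finite_point_law:
  assumes a: "\<alpha> > 0"
  shows "finite_measure (point_law \<zeta> \<alpha> R :: 'a::euclidean_space measure)"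
  by (rule finite_measureI) (use neq_top_trans[OF ennreal_one_neq_top point_law_UNIV[OF a, of \<zeta> R]] in simp)

lemma sphere_big: "emeasure (sphere_unif :: 'a::euclidean_space measure) {\<theta>. norm \<theta> > 1} = 0"
proof -
  have "sgn -` {\<theta>::'a. norm \<theta> > 1} = {}" by (auto simp: norm_sgn split: if_splits)
  then show ?thesis unfolding sphere_unif_def
    by (subst emeasure_distr) auto
qed

lemma tanh_abs_lt1: "\<bar>tanh (x::real)\<bar> < 1"
  using tanh_real_gt_neg1[of x] tanh_real_lt_1[of x] by (simp add: abs_less_iff)

lemma norm_polar_big: "norm (polar_pt \<zeta> R u) \<ge> 1 \<Longrightarrow> norm (snd u) > 1"
proof -
  assume h: "norm (polar_pt \<zeta> R u) \<ge> 1"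
  have "norm (polar_pt \<zeta> R u) = \<bar>tanh (\<zeta> * (R - fst u) / 2)\<bar> * norm (snd u)" unfolding polar_pt_def by simp
  show ?thesis
  proof (rule ccontr)
    assume "\<not> norm (snd u) > 1"
    then have "\<bar>tanh (\<zeta> * (R - fst u) / 2)\<bar> * norm (snd u) \<le> \<bar>tanh (\<zeta> * (R - fst u) / 2)\<bar> * 1"
      by (intro mult_left_mono) auto
    then show False using h \<open>norm (polar_pt \<zeta> R u) = _\<close> tanh_abs_lt1[of "\<zeta> * (R - fst u) / 2"] by linarith
  qed
qed

lemma point_law_big:
  assumes a: "\<alpha> > 0"
  shows "emeasure (point_law \<zeta> \<alpha> R :: 'a::euclidean_space measure) {z. norm z \<ge> 1} = 0"
proof -
  interpret S: finite_measure "sphere_unif :: 'a measure" by (rule finite_sphere)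
  have "emeasure (point_law \<zeta> \<alpha> R :: 'a measure) {z. norm z \<ge> 1}
     = emeasure (density lborel (\<lambda>t. ennreal (rho_bar DIM('a) \<alpha> R t)) \<Otimes>\<^sub>M (sphere_unif :: 'a measure)) (polar_pt \<zeta> R -` {z. norm z \<ge> 1})"
    unfolding point_law_def by (subst emeasure_distr) (auto simp: space_pair_measure)
  also have "\<dots> \<le> emeasure (density lborel (\<lambda>t. ennreal (rho_bar DIM('a) \<alpha> R t)) \<Otimes>\<^sub>M (sphere_unif :: 'a measure)) (UNIV \<times> {\<theta>. norm \<theta> > 1})"
    by (rule emeasure_mono) (auto dest: norm_polar_big)
  also have "\<dots> = emeasure (density lborel (\<lambda>t. ennreal (rho_bar DIM('a) \<alpha> R t))) UNIV * emeasure (sphere_unif :: 'a measure) {\<theta>. norm \<theta> > 1}"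
    by (rule S.emeasure_pair_measure_Times) auto
  also have "\<dots> = 0" by (simp add: sphere_big)
  finally show ?thesis by simp
qed

lemma PiM_space_le1:
  fixes m :: nat
  assumes a: "\<alpha> > 0"
  shows "emeasure (PiM {..<m} (\<lambda>_. point_law \<zeta> \<alpha> R :: 'a::euclidean_space measure)) A \<le> 1"
proof -
  interpret F: finite_measure "point_law \<zeta> \<alpha> R :: 'a measure" by (rule finite_point_law[OF a])
  interpret P: product_sigma_finite "\<lambda>_::nat. point_law \<zeta> \<alpha> R :: 'a measure"
    by unfold_locales
  show ?thesis
  proof (cases "A \<in> sets (PiM {..<m} (\<lambda>_. point_law \<zeta> \<alpha> R :: 'a measure))")
    case True
    have "emeasure (PiM {..<m} (\<lambda>_. point_law \<zeta> \<alpha> R :: 'a measure)) A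
        \<le> emeasure (PiM {..<m} (\<lambda>_. point_law \<zeta> \<alpha> R :: 'a measure)) (PiE {..<m} (\<lambda>_. UNIV))"
    proof (rule emeasure_mono)
      have sp: "space (PiM {..<m} (\<lambda>_. point_law \<zeta> \<alpha> R :: 'a measure)) = PiE {..<m} (\<lambda>_. UNIV)"
        by (simp add: space_PiM)
      show "A \<subseteq> PiE {..<m} (\<lambda>_. UNIV)" using sets.sets_into_space[OF True] unfolding sp .
      show "PiE {..<m} (\<lambda>_. UNIV) \<in> sets (PiM {..<m} (\<lambda>_. point_law \<zeta> \<alpha> R :: 'a measure))"
        unfolding sp[symmetric] by (rule sets.top)
    qed
    also have "\<dots> = (\<Prod>i\<in>{..<m}. emeasure (point_law \<zeta> \<alpha> R :: 'a measure) UNIV)"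
      by (rule P.emeasure_PiM) auto
    also have "\<dots> \<le> 1" using point_law_UNIV[OF a] by (intro prod_le_1) auto
    finally show ?thesis .
  qed (simp add: emeasure_notin_sets)
qed

lemma PiM_bad_null:
  fixes m :: nat
  assumes a: "\<alpha> > 0"
  shows "emeasure (PiM {..<m} (\<lambda>_. point_law \<zeta> \<alpha> R :: 'a::euclidean_space measure))
           {\<omega> \<in> space (PiM {..<m} (\<lambda>_. point_law \<zeta> \<alpha> R :: 'a measure)). \<exists>i<m. norm (\<omega> i) \<ge> 1} = 0"
proof -
  interpret F: finite_measure "point_law \<zeta> \<alpha> R :: 'a measure" by (rule finite_point_law[OF a])
  interpret P: product_sigma_finite "\<lambda>_::nat. point_law \<zeta> \<alpha> R :: 'a measure"
    by unfold_locales
  define B where "B i = PiE {..<m} (\<lambda>j. if j = i then {z::'a. norm z \<ge> 1} else UNIV)" for i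
  have Bs: "B i \<in> sets (PiM {..<m} (\<lambda>_. point_law \<zeta> \<alpha> R :: 'a measure))" for i
    unfolding B_def by (rule sets_PiM_I_finite) auto
  have eq: "{\<omega> \<in> space (PiM {..<m} (\<lambda>_. point_law \<zeta> \<alpha> R :: 'a measure)). \<exists>i<m. norm (\<omega> i) \<ge> 1} = (\<Union>i\<in>{..<m}. B i)"
  proof (intro set_eqI iffI)
    fix \<omega> assume "\<omega> \<in> {\<omega> \<in> space (PiM {..<m} (\<lambda>_. point_law \<zeta> \<alpha> R :: 'a measure)). \<exists>i<m. norm (\<omega> i) \<ge> 1}"
    then obtain i where i: "i < m" "norm (\<omega> i) \<ge> 1" and sp: "\<omega> \<in> PiE {..<m} (\<lambda>_. UNIV)"
      by (auto simp: space_PiM)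
    have "\<omega> \<in> B i" unfolding B_def using sp i by (auto simp: PiE_def Pi_def)
    then show "\<omega> \<in> (\<Union>i\<in>{..<m}. B i)" using i by blast
  next
    fix \<omega> assume "\<omega> \<in> (\<Union>i\<in>{..<m}. B i)"
    then obtain i where i: "i < m" "\<omega> \<in> B i" by blast
    then have "norm (\<omega> i) \<ge> 1" "\<omega> \<in> PiE {..<m} (\<lambda>_. UNIV)" unfolding B_def by (auto simp: PiE_def Pi_def)
    then show "\<omega> \<in> {\<omega> \<in> space (PiM {..<m} (\<lambda>_. point_law \<zeta> \<alpha> R :: 'a measure)). \<exists>i<m. norm (\<omega> i) \<ge> 1}"
      using i by (auto simp: space_PiM)
  qed
  have B0: "emeasure (PiM {..<m} (\<lambda>_. point_law \<zeta> \<alpha> R :: 'a measure)) (B i) = 0" if i: "i < m" for i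
  proof -
    have "emeasure (PiM {..<m} (\<lambda>_. point_law \<zeta> \<alpha> R :: 'a measure)) (B i)
        = (\<Prod>j\<in>{..<m}. emeasure (point_law \<zeta> \<alpha> R :: 'a measure) (if j = i then {z::'a. norm z \<ge> 1} else UNIV))"
      unfolding B_def by (rule P.emeasure_PiM) auto
    also have "\<dots> = 0" using i point_law_big[OF a, of \<zeta> R]
      by (intro prod_zero bexI[of _ i]) auto
    finally show ?thesis .
  qed
  have "emeasure (PiM {..<m} (\<lambda>_. point_law \<zeta> \<alpha> R :: 'a measure)) (\<Union>i\<in>{..<m}. B i)
      \<le> (\<Sum>i\<in>{..<m}. emeasure (PiM {..<m} (\<lambda>_. point_law \<zeta> \<alpha> R :: 'a measure)) (B i))"
    using Bs by (intro emeasure_subadditive_finite[of "{..<m}" B]) blast+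
  also have "\<dots> = 0" using B0 by simp
  finally show ?thesis unfolding eq by simp
qed

lemma poisson_sums: "(\<lambda>m. lam ^ m / fact m * exp (- lam)) sums (1::real)"
proof -
  have "(\<lambda>m. lam ^ m /\<^sub>R fact m) sums exp lam" by (rule exp_converges)
  then have "(\<lambda>m. lam ^ m / fact m * exp (- lam)) sums (exp lam * exp (- lam))"
    by (intro sums_mult2) (simp add: divide_inverse_commute scaleR_conv_of_real)
  then show ?thesis by (simp add: exp_minus)
qed

lemma ppp_bounds:
  assumes a: "\<alpha> > 0" and l: "lam \<ge> 0"
  shows "0 \<le> ppp_prob lam (point_law \<zeta> \<alpha> R :: 'a::euclidean_space measure) P"
    and "ppp_prob lam (point_law \<zeta> \<alpha> R :: 'a::euclidean_space measure) P \<le> 1"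
proof -
  define T where "T m = measure (PiM {..<m} (\<lambda>_. point_law \<zeta> \<alpha> R :: 'a measure))
          {\<omega> \<in> space (PiM {..<m} (\<lambda>_. point_law \<zeta> \<alpha> R :: 'a measure)). P (map \<omega> [0..<m])}" for m
  have T: "0 \<le> T m" "T m \<le> 1" for m
  proof -
    show "0 \<le> T m" unfolding T_def by simp
    show "T m \<le> 1" unfolding T_def measure_def
      by (rule enn2real_leI) (use PiM_space_le1[OF a] in simp_all)
  qed
  define b where "b m = lam ^ m / fact m * exp (- lam)" for m
  have bn: "0 \<le> b m" for m unfolding b_def using l by simp
  have sb: "summable b" "suminf b = 1" using poisson_sums[of lam] unfolding b_def by (auto simp: sums_iff)
  have tb: "0 \<le> b m * T m" "b m * T m \<le> b m" for m using T bn by (auto intro: mult_left_le)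
  have sa: "summable (\<lambda>m. b m * T m)"
    by (rule summable_comparison_test'[OF sb(1)]) (use tb in auto)
  have eq: "ppp_prob lam (point_law \<zeta> \<alpha> R :: 'a measure) P = (\<Sum>m. b m * T m)"
    unfolding ppp_prob_def b_def T_def ..
  show "0 \<le> ppp_prob lam (point_law \<zeta> \<alpha> R :: 'a::euclidean_space measure) P"
    unfolding eq using sa tb by (intro suminf_nonneg) auto
  have "(\<Sum>m. b m * T m) \<le> suminf b" using tb sa sb by (intro suminf_le) auto
  then show "ppp_prob lam (point_law \<zeta> \<alpha> R :: 'a::euclidean_space measure) P \<le> 1" unfolding eq sb(2) .
qed

lemma ppp_zero:
  assumes a: "\<alpha> > 0" and H: "\<And>xs. \<forall>z\<in>set xs. norm z < 1 \<Longrightarrow> \<not> P xs"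
  shows "ppp_prob lam (point_law \<zeta> \<alpha> R :: 'a::euclidean_space measure) P = 0"
proof -
  have "emeasure (PiM {..<m} (\<lambda>_. point_law \<zeta> \<alpha> R :: 'a measure))
          {\<omega> \<in> space (PiM {..<m} (\<lambda>_. point_law \<zeta> \<alpha> R :: 'a measure)). P (map \<omega> [0..<m])} = 0" for m
  proof -
    have sub: "{\<omega> \<in> space (PiM {..<m} (\<lambda>_. point_law \<zeta> \<alpha> R :: 'a measure)). P (map \<omega> [0..<m])}
       \<subseteq> {\<omega> \<in> space (PiM {..<m} (\<lambda>_. point_law \<zeta> \<alpha> R :: 'a measure)). \<exists>i<m. norm (\<omega> i) \<ge> 1}"
    proof safe
      fix \<omega> assume "P (map \<omega> [0..<m])" "\<omega> \<in> space (PiM {..<m} (\<lambda>_. point_law \<zeta> \<alpha> R :: 'a measure))"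
      show "\<exists>i<m. norm (\<omega> i) \<ge> 1"
      proof (rule ccontr)
        assume "\<not> (\<exists>i<m. norm (\<omega> i) \<ge> 1)"
        then have "\<forall>z\<in>set (map \<omega> [0..<m]). norm z < 1" by auto
        with H \<open>P (map \<omega> [0..<m])\<close> show False by blast
      qed
    qed
    have Bm: "{\<omega> \<in> space (PiM {..<m} (\<lambda>_. point_law \<zeta> \<alpha> R :: 'a measure)). \<exists>i<m. norm (\<omega> i) \<ge> 1}
        \<in> sets (PiM {..<m} (\<lambda>_. point_law \<zeta> \<alpha> R :: 'a measure))"
      by measurable
    have le: "emeasure (PiM {..<m} (\<lambda>_. point_law \<zeta> \<alpha> R :: 'a measure))
          {\<omega> \<in> space (PiM {..<m} (\<lambda>_. point_law \<zeta> \<alpha> R :: 'a measure)). P (map \<omega> [0..<m])} \<le> 0"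
      using emeasure_mono[OF sub Bm] unfolding PiM_bad_null[OF a, of m \<zeta> R] .
    then show ?thesis by (simp only: le_zero_eq)
  qed
  then show ?thesis unfolding ppp_prob_def measure_def by simp
qed


lemma sets_OM [measurable_cong, simp]:
  "sets (outer_meas \<alpha> \<gamma> R :: (real \<times> 'a::euclidean_space) measure) = sets (borel \<Otimes>\<^sub>M borel)"
  unfolding outer_meas_def by (intro sets_pair_measure_cong) auto

lemma space_OM [simp]: "space (outer_meas \<alpha> \<gamma> R :: (real \<times> 'a::euclidean_space) measure) = UNIV"
  unfolding outer_meas_def by (simp add: space_pair_measure)

lemma dens2_mass:
  assumes a: "\<alpha> > 0"
  shows "emeasure (density lborel (\<lambda>t. ennreal (indicator {0..\<gamma> * R} t * rho_bar d \<alpha> R t))) UNIV \<le> 1"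
proof -
  have "emeasure (density lborel (\<lambda>t. ennreal (indicator {0..\<gamma> * R} t * rho_bar d \<alpha> R t))) UNIV
      = (\<integral>\<^sup>+t. ennreal (indicator {0..\<gamma> * R} t * rho_bar d \<alpha> R t) \<partial>lborel)"
    by (simp add: emeasure_density)
  also have "\<dots> \<le> (\<integral>\<^sup>+t. ennreal (rho_bar d \<alpha> R t) \<partial>lborel)"
    using rho_nonneg[OF a] by (intro nn_integral_mono ennreal_leI) (auto simp: indicator_def)
  also have "\<dots> \<le> 1" by (rule rho_mass[OF a])
  finally show ?thesis .
qed

lemma finite_dens2:
  assumes a: "\<alpha> > 0"
  shows "finite_measure (density lborel (\<lambda>t. ennreal (indicator {0..\<gamma> * R} t * rho_bar d \<alpha> R t)))"
  by (rule finite_measureI) (use neq_top_trans[OF ennreal_one_neq_top dens2_mass[OF a]] in simp)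

lemma OM_Times:
  assumes a: "\<alpha> > 0" and A: "A \<in> sets borel" and B: "B \<in> sets borel"
  shows "emeasure (outer_meas \<alpha> \<gamma> R :: (real \<times> 'a::euclidean_space) measure) (A \<times> B)
     = emeasure (density lborel (\<lambda>t. ennreal (indicator {0..\<gamma> * R} t * rho_bar DIM('a) \<alpha> R t))) A
       * emeasure (sphere_unif :: 'a measure) B"
proof -
  interpret S: finite_measure "sphere_unif :: 'a measure" by (rule finite_sphere)
  show ?thesis unfolding outer_meas_def using A B by (intro S.emeasure_pair_measure_Times) auto
qed

lemma OM_UNIV:
  assumes a: "\<alpha> > 0"
  shows "emeasure (outer_meas \<alpha> \<gamma> R :: (real \<times> 'a::euclidean_space) measure) UNIV \<le> 1"
proof -
  have "emeasure (outer_meas \<alpha> \<gamma> R :: (real \<times> 'a) measure) UNIV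
     = emeasure (outer_meas \<alpha> \<gamma> R :: (real \<times> 'a) measure) (UNIV \<times> UNIV)" by simp
  also have "\<dots> \<le> 1" using dens2_mass[OF a, where \<gamma>=\<gamma> and d="DIM('a)" and R=R]
    by (subst OM_Times[OF a]) (auto simp: sphere_UNIV)
  finally show ?thesis .
qed

lemma finite_OM:
  assumes a: "\<alpha> > 0"
  shows "finite_measure (outer_meas \<alpha> \<gamma> R :: (real \<times> 'a::euclidean_space) measure)"
  by (rule finite_measureI) (use neq_top_trans[OF ennreal_one_neq_top OM_UNIV[OF a]] in simp)

definition bad :: "real \<Rightarrow> real \<Rightarrow> (real \<times> 'a::euclidean_space) set" where
  "bad \<gamma> R = {u. fst u \<notin> {0..\<gamma> * R} \<or> norm (snd u) > 1}"

lemma bad_sets [measurable]: "bad \<gamma> R \<in> sets (borel \<Otimes>\<^sub>M borel)"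
proof -
  have "bad \<gamma> R = {u \<in> space (borel \<Otimes>\<^sub>M borel). fst u \<notin> {0..\<gamma> * R} \<or> norm (snd u) > (1::real)}"
    unfolding bad_def by (simp add: space_pair_measure)
  also have "\<dots> \<in> sets (borel \<Otimes>\<^sub>M borel)" by measurable
  finally show ?thesis .
qed

lemma OM_bad:
  assumes a: "\<alpha> > 0"
  shows "emeasure (outer_meas \<alpha> \<gamma> R :: (real \<times> 'a::euclidean_space) measure) (bad \<gamma> R) = 0"
proof -
  have eq: "bad \<gamma> R = (- {0..\<gamma> * R}) \<times> (UNIV :: 'a set) \<union> UNIV \<times> {\<theta>::'a. norm \<theta> > 1}"
    unfolding bad_def by auto
  have d0: "emeasure (density lborel (\<lambda>t. ennreal (indicator {0..\<gamma> * R} t * rho_bar DIM('a) \<alpha> R t))) (- {0..\<gamma> * R}) = 0"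
  proof -
    have z: "(\<lambda>t. ennreal (indicator {0..\<gamma> * R} t * rho_bar DIM('a) \<alpha> R t) * indicator (- {0..\<gamma> * R}) t) = (\<lambda>_. 0)"
      by (auto simp: indicator_def fun_eq_iff)
    show ?thesis by (subst emeasure_density) (auto simp: z)
  qed
  have m1: "emeasure (outer_meas \<alpha> \<gamma> R :: (real \<times> 'a) measure) ((- {0..\<gamma> * R}) \<times> UNIV) = 0"
    by (subst OM_Times[OF a]) (auto simp: d0)
  have m2: "emeasure (outer_meas \<alpha> \<gamma> R :: (real \<times> 'a) measure) (UNIV \<times> {\<theta>::'a. norm \<theta> > 1}) = 0"
    by (subst OM_Times[OF a]) (auto simp: sphere_big)
  have "emeasure (outer_meas \<alpha> \<gamma> R :: (real \<times> 'a) measure) (bad \<gamma> R)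
     \<le> emeasure (outer_meas \<alpha> \<gamma> R :: (real \<times> 'a) measure) ((- {0..\<gamma> * R}) \<times> UNIV)
       + emeasure (outer_meas \<alpha> \<gamma> R :: (real \<times> 'a) measure) (UNIV \<times> {\<theta>::'a. norm \<theta> > 1})"
    unfolding eq by (intro emeasure_subadditive) auto
  then show ?thesis using m1 m2 by simp
qed

definition cap :: "nat \<Rightarrow> real \<Rightarrow> real" where
  "cap d \<delta> = 2 * 3 ^ d * \<delta> ^ (d - 1)"

lemma OM_cap:
  assumes a: "\<alpha> > 0" and d: "\<delta> > 0"
  shows "emeasure (outer_meas \<alpha> \<gamma> R :: (real \<times> 'a::euclidean_space) measure) {u. norm (sgn (snd u) - \<theta>0) \<le> \<delta>}
      \<le> ennreal (cap DIM('a) \<delta>)"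
proof -
  have eq: "{u::real \<times> 'a. norm (sgn (snd u) - \<theta>0) \<le> \<delta>} = UNIV \<times> {\<theta>. norm (sgn \<theta> - \<theta>0) \<le> \<delta>}" by auto
  have "emeasure (outer_meas \<alpha> \<gamma> R :: (real \<times> 'a) measure) {u. norm (sgn (snd u) - \<theta>0) \<le> \<delta>}
     = emeasure (density lborel (\<lambda>t. ennreal (indicator {0..\<gamma> * R} t * rho_bar DIM('a) \<alpha> R t))) UNIV
       * emeasure (sphere_unif :: 'a measure) {\<theta>. norm (sgn \<theta> - \<theta>0) \<le> \<delta>}"
    unfolding eq by (rule OM_Times[OF a]) auto
  also have "\<dots> \<le> 1 * ennreal (cap DIM('a) \<delta>)"
    unfolding cap_def using dens2_mass[OF a] cap_bound[OF d, of \<theta>0] by (intro mult_mono) auto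
  finally show ?thesis by simp
qed

lemma polar_norm: "norm (snd u) \<le> 1 \<Longrightarrow> norm (polar_pt \<zeta> R u) < 1"
proof -
  assume h: "norm (snd u) \<le> 1"
  have "norm (polar_pt \<zeta> R u) = \<bar>tanh (\<zeta> * (R - fst u) / 2)\<bar> * norm (snd u)" unfolding polar_pt_def by simp
  also have "\<dots> \<le> \<bar>tanh (\<zeta> * (R - fst u) / 2)\<bar> * 1" using h by (intro mult_left_mono) auto
  also have "\<dots> < 1" using tanh_abs_lt1 by simp
  finally show ?thesis .
qed

lemma polar_sgn:
  assumes z: "\<zeta> > 0" and t: "fst u < R"
  shows "sgn (polar_pt \<zeta> R u) = sgn (snd u)"
proof -
  have "tanh (\<zeta> * (R - fst u) / 2) > 0" using z t by simp
  then show ?thesis unfolding polar_pt_def by (simp add: sgn_scaleR)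
qed

lemma pD2_bounds:
  assumes a: "\<alpha> > 0"
  shows "0 \<le> pD2 \<zeta> \<alpha> \<gamma> k E n R (x::'a::euclidean_space) y" "pD2 \<zeta> \<alpha> \<gamma> k E n R x y \<le> 1"
  unfolding pD2_def by (rule ppp_bounds[OF a]; simp)+

lemma pD2_far:
  fixes u1 u2 :: "real \<times> 'a::euclidean_space"
  assumes tree: "is_tree k E" and k: "k \<ge> 2" and z: "\<zeta> > 0" and a: "\<alpha> > 0"
    and g: "0 < \<gamma>" "\<gamma> < 1/2" and R: "R > 0"
    and u1: "u1 \<notin> bad \<gamma> R" and u2: "u2 \<notin> bad \<gamma> R"
    and far: "norm (sgn (snd u1) - sgn (snd u2)) > 4 * real k * (11 * exp (- \<zeta> * (1 - 2 * \<gamma>) * R / 2))"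
  shows "pD2 \<zeta> \<alpha> \<gamma> k E n R (polar_pt \<zeta> R u1) (polar_pt \<zeta> R u2) = 0"
  unfolding pD2_def
proof (rule ppp_zero[OF a])
  fix xs :: "'a list" assume pts: "\<forall>z\<in>set xs. norm z < 1"
  have gR: "\<gamma> * R < R" using g R by simp
  have t1: "fst u1 < R" "norm (snd u1) \<le> 1" using u1 gR unfolding bad_def by auto
  have t2: "fst u2 < R" "norm (snd u2) \<le> 1" using u2 gR unfolding bad_def by auto
  show "\<not> D2 \<zeta> R \<gamma> k E xs (polar_pt \<zeta> R u1) (polar_pt \<zeta> R u2) \<noteq> 0"
    using D2_far[OF tree k z g R pts polar_norm[OF t1(2)] polar_norm[OF t2(2)]] far
      polar_sgn[OF z t1(1)] polar_sgn[OF z t2(1)] by simp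
qed


lemma sets_pair_OM:
  "sets ((outer_meas \<alpha> \<gamma> R :: (real \<times> 'a::euclidean_space) measure) \<Otimes>\<^sub>M outer_meas \<alpha> \<gamma> R)
    = sets ((borel \<Otimes>\<^sub>M borel) \<Otimes>\<^sub>M (borel \<Otimes>\<^sub>M borel) :: ((real \<times> 'a) \<times> (real \<times> 'a)) measure)"
  by (intro sets_pair_measure_cong sets_OM)

lemma close2_sets:
  "{v::(real \<times> 'a::euclidean_space) \<times> (real \<times> 'a). norm (sgn (snd (fst v)) - sgn (snd (snd v))) \<le> \<delta>}
     \<in> sets ((outer_meas \<alpha> \<gamma> R :: (real \<times> 'a) measure) \<Otimes>\<^sub>M outer_meas \<alpha> \<gamma> R)"
proof -
  have "{v::(real \<times> 'a) \<times> (real \<times> 'a). norm (sgn (snd (fst v)) - sgn (snd (snd v))) \<le> \<delta>}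
    = {v \<in> space ((borel \<Otimes>\<^sub>M borel) \<Otimes>\<^sub>M (borel \<Otimes>\<^sub>M borel) :: ((real \<times> 'a) \<times> (real \<times> 'a)) measure).
         norm (sgn (snd (fst v)) - sgn (snd (snd v))) \<le> \<delta>}"
    by (simp add: space_pair_measure)
  also have "\<dots> \<in> sets ((borel \<Otimes>\<^sub>M borel) \<Otimes>\<^sub>M (borel \<Otimes>\<^sub>M borel) :: ((real \<times> 'a) \<times> (real \<times> 'a)) measure)"
    by measurable
  finally show ?thesis unfolding sets_pair_OM .
qed

lemma OM_close2:
  assumes a: "\<alpha> > 0" and d: "\<delta> > 0"
  shows "emeasure ((outer_meas \<alpha> \<gamma> R :: (real \<times> 'a::euclidean_space) measure) \<Otimes>\<^sub>M outer_meas \<alpha> \<gamma> R)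
      {v. norm (sgn (snd (fst v)) - sgn (snd (snd v))) \<le> \<delta>} \<le> ennreal (cap DIM('a) \<delta>)"
proof -
  let ?M = "outer_meas \<alpha> \<gamma> R :: (real \<times> 'a) measure"
  interpret F: finite_measure ?M by (rule finite_OM[OF a])
  interpret P: pair_sigma_finite ?M ?M by unfold_locales
  have "emeasure (?M \<Otimes>\<^sub>M ?M) {v. norm (sgn (snd (fst v)) - sgn (snd (snd v))) \<le> \<delta>}
      = (\<integral>\<^sup>+y. emeasure ?M ((\<lambda>x. (x, y)) -` {v. norm (sgn (snd (fst v)) - sgn (snd (snd v))) \<le> \<delta>}) \<partial>?M)"
    by (rule P.emeasure_pair_measure_alt2[OF close2_sets])
  also have "\<dots> \<le> (\<integral>\<^sup>+y. ennreal (cap DIM('a) \<delta>) \<partial>?M)"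
    by (intro nn_integral_mono) (simp add: OM_cap[OF a d])
  also have "\<dots> = ennreal (cap DIM('a) \<delta>) * emeasure ?M UNIV" by simp
  also have "\<dots> \<le> ennreal (cap DIM('a) \<delta>) * 1" by (intro mult_left_mono OM_UNIV[OF a]) auto
  finally show ?thesis by simp
qed

lemma bad_OM_sets: "bad \<gamma> R \<in> sets (outer_meas \<alpha> \<gamma>' R' :: (real \<times> 'a::euclidean_space) measure)"
  using bad_sets by simp

lemma OM_UNIV_sets: "UNIV \<in> sets (outer_meas \<alpha> \<gamma> R :: (real \<times> 'a::euclidean_space) measure)"
  using sets.top[of "outer_meas \<alpha> \<gamma> R :: (real \<times> 'a) measure"] by simp

lemma ennreal_powr_le_ind:
  assumes "0 \<le> x" "x \<le> 1" "p > 0" "x \<noteq> 0 \<Longrightarrow> (1::ennreal) \<le> S"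
  shows "ennreal (x powr p) \<le> S"
proof (cases "x = 0")
  case True then show ?thesis by simp
next
  case False
  have "x powr p \<le> 1" using assms by (intro powr_le1) auto
  then have "ennreal (x powr p) \<le> 1" by (simp add: ennreal_le_1)
  also have "\<dots> \<le> S" using assms(4) False .
  finally show ?thesis .
qed

lemma int2:
  fixes \<zeta> \<alpha> \<gamma> p R :: real
  assumes tree: "is_tree k E" and k: "k \<ge> 2" and z: "\<zeta> > 0" and a: "\<alpha> > 0"
    and g: "0 < \<gamma>" "\<gamma> < 1/2" and R: "R > 0" and p: "p > 0"
  shows "(\<integral>\<^sup>+u. ennreal ((pD2 \<zeta> \<alpha> \<gamma> k E n R (polar_pt \<zeta> R (fst u)) (polar_pt \<zeta> R (snd u))) powr p)
           \<partial>((outer_meas \<alpha> \<gamma> R :: (real \<times> 'a::euclidean_space) measure) \<Otimes>\<^sub>M outer_meas \<alpha> \<gamma> R))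
         \<le> ennreal (cap DIM('a) (4 * real k * (11 * exp (- \<zeta> * (1 - 2 * \<gamma>) * R / 2))))"
proof -
  let ?M = "outer_meas \<alpha> \<gamma> R :: (real \<times> 'a) measure"
  define \<delta> where "\<delta> = 4 * real k * (11 * exp (- \<zeta> * (1 - 2 * \<gamma>) * R / 2))"
  have dp: "\<delta> > 0" unfolding \<delta>_def using k by simp
  define Cl where "Cl = {v::(real \<times> 'a) \<times> (real \<times> 'a). norm (sgn (snd (fst v)) - sgn (snd (snd v))) \<le> \<delta>}"
  define B1 where "B1 = (bad \<gamma> R :: (real \<times> 'a) set) \<times> (UNIV :: (real \<times> 'a) set)"
  define B2 where "B2 = (UNIV :: (real \<times> 'a) set) \<times> (bad \<gamma> R :: (real \<times> 'a) set)"
  interpret F: finite_measure ?M by (rule finite_OM[OF a])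
  interpret P: pair_sigma_finite ?M ?M by unfold_locales
  have sB1: "B1 \<in> sets (?M \<Otimes>\<^sub>M ?M)" unfolding B1_def
    by (rule pair_measureI) (auto simp: bad_OM_sets OM_UNIV_sets simp del: sets_OM)
  have sB2: "B2 \<in> sets (?M \<Otimes>\<^sub>M ?M)" unfolding B2_def
    by (rule pair_measureI) (auto simp: bad_OM_sets OM_UNIV_sets simp del: sets_OM)
  have sCl: "Cl \<in> sets (?M \<Otimes>\<^sub>M ?M)" unfolding Cl_def by (rule close2_sets)
  have pw: "ennreal ((pD2 \<zeta> \<alpha> \<gamma> k E n R (polar_pt \<zeta> R (fst u)) (polar_pt \<zeta> R (snd u))) powr p)
       \<le> indicator B1 u + indicator B2 u + indicator Cl u" for u
  proof (rule ennreal_powr_le_ind[OF pD2_bounds(1)[OF a] pD2_bounds(2)[OF a] p])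
    assume nz: "pD2 \<zeta> \<alpha> \<gamma> k E n R (polar_pt \<zeta> R (fst u)) (polar_pt \<zeta> R (snd u)) \<noteq> 0"
    have "u \<in> B1 \<or> u \<in> B2 \<or> u \<in> Cl"
    proof (rule ccontr)
      assume "\<not> (u \<in> B1 \<or> u \<in> B2 \<or> u \<in> Cl)"
      then have "fst u \<notin> bad \<gamma> R" "snd u \<notin> bad \<gamma> R"
        "norm (sgn (snd (fst u)) - sgn (snd (snd u))) > \<delta>"
        unfolding B1_def B2_def Cl_def by (auto simp: mem_Times_iff)
      from pD2_far[OF tree k z a g R this[unfolded \<delta>_def]] nz show False by simp
    qed
    then show "1 \<le> indicator B1 u + indicator B2 u + (indicator Cl u :: ennreal)"
      by (auto simp: indicator_def)
  qed
  have "(\<integral>\<^sup>+u. ennreal ((pD2 \<zeta> \<alpha> \<gamma> k E n R (polar_pt \<zeta> R (fst u)) (polar_pt \<zeta> R (snd u))) powr p) \<partial>(?M \<Otimes>\<^sub>M ?M))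
     \<le> (\<integral>\<^sup>+u. indicator B1 u + indicator B2 u + indicator Cl u \<partial>(?M \<Otimes>\<^sub>M ?M))"
    by (intro nn_integral_mono pw)
  also have "\<dots> = emeasure (?M \<Otimes>\<^sub>M ?M) B1 + emeasure (?M \<Otimes>\<^sub>M ?M) B2 + emeasure (?M \<Otimes>\<^sub>M ?M) Cl"
    using sB1 sB2 sCl by (simp add: nn_integral_add)
  also have "emeasure (?M \<Otimes>\<^sub>M ?M) B1 = 0" unfolding B1_def
    by (subst F.emeasure_pair_measure_Times) (auto simp: bad_OM_sets OM_UNIV_sets OM_bad[OF a] simp del: sets_OM)
  also have "emeasure (?M \<Otimes>\<^sub>M ?M) B2 = 0" unfolding B2_def
    by (subst F.emeasure_pair_measure_Times) (auto simp: bad_OM_sets OM_UNIV_sets OM_bad[OF a] simp del: sets_OM)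
  also have "emeasure (?M \<Otimes>\<^sub>M ?M) Cl \<le> ennreal (cap DIM('a) \<delta>)"
    unfolding Cl_def by (rule OM_close2[OF a dp])
  finally show ?thesis unfolding \<delta>_def by simp
qed

lemma cap_sets: "{x::real \<times> 'a::euclidean_space. norm (sgn (snd x) - \<theta>0) \<le> \<delta>} \<in> sets (borel \<Otimes>\<^sub>M borel)"
proof -
  have "{x::real \<times> 'a. norm (sgn (snd x) - \<theta>0) \<le> \<delta>} = UNIV \<times> {\<theta>. norm (sgn \<theta> - \<theta>0) \<le> \<delta>}" by auto
  also have "\<dots> \<in> sets (borel \<Otimes>\<^sub>M borel)" by (rule pair_measureI) auto
  finally show ?thesis .
qed

lemma close3_sets:
  "{u::(real \<times> 'a::euclidean_space) \<times> (real \<times> 'a) \<times> (real \<times> 'a).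
      norm (sgn (snd (fst u)) - sgn (snd (snd (snd u)))) \<le> \<delta> \<and> norm (sgn (snd (fst (snd u))) - sgn (snd (snd (snd u)))) \<le> \<delta>}
     \<in> sets ((outer_meas \<alpha> \<gamma> R :: (real \<times> 'a) measure) \<Otimes>\<^sub>M (outer_meas \<alpha> \<gamma> R \<Otimes>\<^sub>M outer_meas \<alpha> \<gamma> R))"
proof -
  have e: "sets ((outer_meas \<alpha> \<gamma> R :: (real \<times> 'a) measure) \<Otimes>\<^sub>M (outer_meas \<alpha> \<gamma> R \<Otimes>\<^sub>M outer_meas \<alpha> \<gamma> R))
     = sets ((borel \<Otimes>\<^sub>M borel) \<Otimes>\<^sub>M ((borel \<Otimes>\<^sub>M borel) \<Otimes>\<^sub>M (borel \<Otimes>\<^sub>M borel)) :: ((real \<times> 'a) \<times> (real \<times> 'a) \<times> (real \<times> 'a)) measure)"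
    by (intro sets_pair_measure_cong sets_OM)
  have "{u::(real \<times> 'a) \<times> (real \<times> 'a) \<times> (real \<times> 'a).
      norm (sgn (snd (fst u)) - sgn (snd (snd (snd u)))) \<le> \<delta> \<and> norm (sgn (snd (fst (snd u))) - sgn (snd (snd (snd u)))) \<le> \<delta>}
    = {u \<in> space ((borel \<Otimes>\<^sub>M borel) \<Otimes>\<^sub>M ((borel \<Otimes>\<^sub>M borel) \<Otimes>\<^sub>M (borel \<Otimes>\<^sub>M borel)) :: ((real \<times> 'a) \<times> (real \<times> 'a) \<times> (real \<times> 'a)) measure).
      norm (sgn (snd (fst u)) - sgn (snd (snd (snd u)))) \<le> \<delta> \<and> norm (sgn (snd (fst (snd u))) - sgn (snd (snd (snd u)))) \<le> \<delta>}"
    by (simp add: space_pair_measure)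
  also have "\<dots> \<in> sets ((borel \<Otimes>\<^sub>M borel) \<Otimes>\<^sub>M ((borel \<Otimes>\<^sub>M borel) \<Otimes>\<^sub>M (borel \<Otimes>\<^sub>M borel)) :: ((real \<times> 'a) \<times> (real \<times> 'a) \<times> (real \<times> 'a)) measure)"
    by measurable
  finally show ?thesis unfolding e .
qed

lemma int3:
  fixes \<zeta> \<alpha> \<gamma> p R :: real
  assumes tree: "is_tree k E" and k: "k \<ge> 2" and z: "\<zeta> > 0" and a: "\<alpha> > 0"
    and g: "0 < \<gamma>" "\<gamma> < 1/2" and R: "R > 0" and p: "p > 0"
  shows "(\<integral>\<^sup>+u. ennreal ((pD2 \<zeta> \<alpha> \<gamma> k E n R (polar_pt \<zeta> R (fst u)) (polar_pt \<zeta> R (snd (snd u)))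
                          * pD2 \<zeta> \<alpha> \<gamma> k E n R (polar_pt \<zeta> R (fst (snd u))) (polar_pt \<zeta> R (snd (snd u)))) powr p)
           \<partial>((outer_meas \<alpha> \<gamma> R :: (real \<times> 'a::euclidean_space) measure) \<Otimes>\<^sub>M outer_meas \<alpha> \<gamma> R \<Otimes>\<^sub>M outer_meas \<alpha> \<gamma> R))
         \<le> ennreal (cap DIM('a) (4 * real k * (11 * exp (- \<zeta> * (1 - 2 * \<gamma>) * R / 2))))
           * ennreal (cap DIM('a) (4 * real k * (11 * exp (- \<zeta> * (1 - 2 * \<gamma>) * R / 2))))"
proof -
  let ?M = "outer_meas \<alpha> \<gamma> R :: (real \<times> 'a) measure"
  define \<delta> where "\<delta> = 4 * real k * (11 * exp (- \<zeta> * (1 - 2 * \<gamma>) * R / 2))"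
  have dp: "\<delta> > 0" unfolding \<delta>_def using k by simp
  define c where "c = ennreal (cap DIM('a) \<delta>)"
  define Cl where "Cl = {u::(real \<times> 'a) \<times> (real \<times> 'a) \<times> (real \<times> 'a).
      norm (sgn (snd (fst u)) - sgn (snd (snd (snd u)))) \<le> \<delta> \<and> norm (sgn (snd (fst (snd u))) - sgn (snd (snd (snd u)))) \<le> \<delta>}"
  define Cl2 where "Cl2 = {v::(real \<times> 'a) \<times> (real \<times> 'a). norm (sgn (snd (fst v)) - sgn (snd (snd v))) \<le> \<delta>}"
  define Bd where "Bd = (bad \<gamma> R :: (real \<times> 'a) set)"
  define B1 where "B1 = Bd \<times> (UNIV :: ((real \<times> 'a) \<times> (real \<times> 'a)) set)"
  define B2 where "B2 = (UNIV :: (real \<times> 'a) set) \<times> (Bd \<times> (UNIV :: (real \<times> 'a) set))"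
  define B3 where "B3 = (UNIV :: (real \<times> 'a) set) \<times> ((UNIV :: (real \<times> 'a) set) \<times> Bd)"
  interpret F: finite_measure ?M by (rule finite_OM[OF a])
  interpret F2: finite_measure "?M \<Otimes>\<^sub>M ?M" by (intro finite_measure_pair_measure finite_OM[OF a])
  interpret P: pair_sigma_finite ?M ?M by unfold_locales
  interpret P2: pair_sigma_finite ?M "?M \<Otimes>\<^sub>M ?M" by unfold_locales
  have sBd: "Bd \<in> sets ?M" unfolding Bd_def by (rule bad_OM_sets)
  have sU: "UNIV \<in> sets ?M" by (rule OM_UNIV_sets)
  have sU2: "UNIV \<in> sets (?M \<Otimes>\<^sub>M ?M)" using sets.top[of "?M \<Otimes>\<^sub>M ?M"] by (simp add: space_pair_measure)
  have sBdU: "Bd \<times> UNIV \<in> sets (?M \<Otimes>\<^sub>M ?M)" by (rule pair_measureI[OF sBd sU])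
  have sUBd: "UNIV \<times> Bd \<in> sets (?M \<Otimes>\<^sub>M ?M)" by (rule pair_measureI[OF sU sBd])
  have sB1: "B1 \<in> sets (?M \<Otimes>\<^sub>M (?M \<Otimes>\<^sub>M ?M))" unfolding B1_def by (rule pair_measureI[OF sBd sU2])
  have sB2: "B2 \<in> sets (?M \<Otimes>\<^sub>M (?M \<Otimes>\<^sub>M ?M))" unfolding B2_def by (rule pair_measureI[OF sU sBdU])
  have sB3: "B3 \<in> sets (?M \<Otimes>\<^sub>M (?M \<Otimes>\<^sub>M ?M))" unfolding B3_def by (rule pair_measureI[OF sU sUBd])
  have sCl: "Cl \<in> sets (?M \<Otimes>\<^sub>M (?M \<Otimes>\<^sub>M ?M))" unfolding Cl_def by (rule close3_sets)
  have sCl2: "Cl2 \<in> sets (?M \<Otimes>\<^sub>M ?M)" unfolding Cl2_def by (rule close2_sets)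
  have pw: "ennreal ((pD2 \<zeta> \<alpha> \<gamma> k E n R (polar_pt \<zeta> R (fst u)) (polar_pt \<zeta> R (snd (snd u)))
                          * pD2 \<zeta> \<alpha> \<gamma> k E n R (polar_pt \<zeta> R (fst (snd u))) (polar_pt \<zeta> R (snd (snd u)))) powr p)
       \<le> indicator B1 u + indicator B2 u + indicator B3 u + indicator Cl u" for u
  proof (rule ennreal_powr_le_ind[OF _ _ p])
    let ?p13 = "pD2 \<zeta> \<alpha> \<gamma> k E n R (polar_pt \<zeta> R (fst u)) (polar_pt \<zeta> R (snd (snd u)))"
    let ?p23 = "pD2 \<zeta> \<alpha> \<gamma> k E n R (polar_pt \<zeta> R (fst (snd u))) (polar_pt \<zeta> R (snd (snd u)))"
    show "0 \<le> ?p13 * ?p23" by (intro mult_nonneg_nonneg pD2_bounds(1)[OF a])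
    show "?p13 * ?p23 \<le> 1" by (intro mult_le_one pD2_bounds(1)[OF a] pD2_bounds(2)[OF a])
    assume nz: "?p13 * ?p23 \<noteq> 0"
    have "u \<in> B1 \<or> u \<in> B2 \<or> u \<in> B3 \<or> u \<in> Cl"
    proof (rule ccontr)
      assume "\<not> (u \<in> B1 \<or> u \<in> B2 \<or> u \<in> B3 \<or> u \<in> Cl)"
      then have b: "fst u \<notin> bad \<gamma> R" "fst (snd u) \<notin> bad \<gamma> R" "snd (snd u) \<notin> bad \<gamma> R"
        and "\<not> (norm (sgn (snd (fst u)) - sgn (snd (snd (snd u)))) \<le> \<delta> \<and> norm (sgn (snd (fst (snd u))) - sgn (snd (snd (snd u)))) \<le> \<delta>)"
        unfolding B1_def B2_def B3_def Cl_def Bd_def by (auto simp: mem_Times_iff)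
      then consider "norm (sgn (snd (fst u)) - sgn (snd (snd (snd u)))) > \<delta>"
        | "norm (sgn (snd (fst (snd u))) - sgn (snd (snd (snd u)))) > \<delta>" by linarith
      then show False
      proof cases
        case 1
        from pD2_far[OF tree k z a g R b(1) b(3) 1[unfolded \<delta>_def]] nz show False by simp
      next
        case 2
        from pD2_far[OF tree k z a g R b(2) b(3) 2[unfolded \<delta>_def]] nz show False by simp
      qed
    qed
    then show "1 \<le> indicator B1 u + indicator B2 u + indicator B3 u + (indicator Cl u :: ennreal)"
      by (auto simp: indicator_def)
  qed
  have "(\<integral>\<^sup>+u. ennreal ((pD2 \<zeta> \<alpha> \<gamma> k E n R (polar_pt \<zeta> R (fst u)) (polar_pt \<zeta> R (snd (snd u)))
                          * pD2 \<zeta> \<alpha> \<gamma> k E n R (polar_pt \<zeta> R (fst (snd u))) (polar_pt \<zeta> R (snd (snd u)))) powr p)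
           \<partial>(?M \<Otimes>\<^sub>M (?M \<Otimes>\<^sub>M ?M)))
     \<le> (\<integral>\<^sup>+u. indicator B1 u + indicator B2 u + indicator B3 u + indicator Cl u \<partial>(?M \<Otimes>\<^sub>M (?M \<Otimes>\<^sub>M ?M)))"
    by (intro nn_integral_mono pw)
  also have "\<dots> = emeasure (?M \<Otimes>\<^sub>M (?M \<Otimes>\<^sub>M ?M)) B1 + emeasure (?M \<Otimes>\<^sub>M (?M \<Otimes>\<^sub>M ?M)) B2
      + emeasure (?M \<Otimes>\<^sub>M (?M \<Otimes>\<^sub>M ?M)) B3 + emeasure (?M \<Otimes>\<^sub>M (?M \<Otimes>\<^sub>M ?M)) Cl"
    using sB1 sB2 sB3 sCl by (simp add: nn_integral_add)
  also have "emeasure (?M \<Otimes>\<^sub>M (?M \<Otimes>\<^sub>M ?M)) B1 = 0" unfolding B1_def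
    using sBd sU2 by (subst F2.emeasure_pair_measure_Times) (auto simp: Bd_def OM_bad[OF a])
  also have "emeasure (?M \<Otimes>\<^sub>M (?M \<Otimes>\<^sub>M ?M)) B2 = 0"
  proof -
    have "emeasure (?M \<Otimes>\<^sub>M ?M) (Bd \<times> UNIV) = 0"
      using sBd sU by (subst F.emeasure_pair_measure_Times) (auto simp: Bd_def OM_bad[OF a])
    then show ?thesis unfolding B2_def using sU sBdU by (subst F2.emeasure_pair_measure_Times) auto
  qed
  also have "emeasure (?M \<Otimes>\<^sub>M (?M \<Otimes>\<^sub>M ?M)) B3 = 0"
  proof -
    have "emeasure (?M \<Otimes>\<^sub>M ?M) (UNIV \<times> Bd) = 0"
      using sBd sU by (subst F.emeasure_pair_measure_Times) (auto simp: Bd_def OM_bad[OF a])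
    then show ?thesis unfolding B3_def using sU sUBd by (subst F2.emeasure_pair_measure_Times) auto
  qed
  also have "emeasure (?M \<Otimes>\<^sub>M (?M \<Otimes>\<^sub>M ?M)) Cl \<le> c * c"
  proof -
    have "emeasure (?M \<Otimes>\<^sub>M (?M \<Otimes>\<^sub>M ?M)) Cl = (\<integral>\<^sup>+y. emeasure ?M ((\<lambda>x. (x, y)) -` Cl) \<partial>(?M \<Otimes>\<^sub>M ?M))"
      by (rule P2.emeasure_pair_measure_alt2[OF sCl])
    also have "\<dots> \<le> (\<integral>\<^sup>+y. c * indicator Cl2 y \<partial>(?M \<Otimes>\<^sub>M ?M))"
    proof (intro nn_integral_mono)
      fix y :: "(real \<times> 'a) \<times> (real \<times> 'a)"
      show "emeasure ?M ((\<lambda>x. (x, y)) -` Cl) \<le> c * indicator Cl2 y"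
      proof (cases "y \<in> Cl2")
        case True
        have "emeasure ?M ((\<lambda>x. (x, y)) -` Cl) \<le> emeasure ?M {x. norm (sgn (snd x) - sgn (snd (snd y))) \<le> \<delta>}"
          by (rule emeasure_mono) (auto simp: Cl_def cap_sets)
        also have "\<dots> \<le> c" unfolding c_def by (rule OM_cap[OF a dp])
        finally show ?thesis using True by simp
      next
        case False
        then have "(\<lambda>x. (x, y)) -` Cl = {}" unfolding Cl_def Cl2_def by auto
        then show ?thesis by simp
      qed
    qed
    also have "\<dots> = c * emeasure (?M \<Otimes>\<^sub>M ?M) Cl2" using sCl2 by (rule nn_integral_cmult_indicator)
    also have "\<dots> \<le> c * c" unfolding c_def Cl2_def by (intro mult_left_mono OM_close2[OF a dp]) auto
    finally show ?thesis .
  qed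
  finally show ?thesis unfolding c_def \<delta>_def by simp
qed


lemma cap_eq:
  assumes d: "d \<ge> 1"
  shows "cap d (4 * real k * (11 * exp (- \<zeta> * (1 - 2 * \<gamma>) * R / 2)))
       = (2 * 3 ^ d * (44 * real k) ^ (d - 1)) * exp (- \<zeta> * (real d - 1) * (1 - 2 * \<gamma>) * R / 2)"
proof -
  have "exp (- \<zeta> * (1 - 2 * \<gamma>) * R / 2) ^ (d - 1) = exp (real (d - 1) * (- \<zeta> * (1 - 2 * \<gamma>) * R / 2))"
    by (rule exp_of_nat_mult[symmetric])
  also have "\<dots> = exp (- \<zeta> * (real d - 1) * (1 - 2 * \<gamma>) * R / 2)"
    using d by (simp add: of_nat_diff algebra_simps)
  finally have e: "exp (- \<zeta> * (1 - 2 * \<gamma>) * R / 2) ^ (d - 1) = exp (- \<zeta> * (real d - 1) * (1 - 2 * \<gamma>) * R / 2)" .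
  have "cap d (4 * real k * (11 * exp (- \<zeta> * (1 - 2 * \<gamma>) * R / 2)))
      = 2 * 3 ^ d * ((44 * real k) ^ (d - 1) * exp (- \<zeta> * (1 - 2 * \<gamma>) * R / 2) ^ (d - 1))"
  proof -
    have "4 * real k * (11 * exp (- \<zeta> * (1 - 2 * \<gamma>) * R / 2)) = (44 * real k) * exp (- \<zeta> * (1 - 2 * \<gamma>) * R / 2)"
      by simp
    then show ?thesis unfolding cap_def by (simp only: power_mult_distrib)
  qed
  then show ?thesis unfolding e by simp
qed

theorem lemma3p7:
  fixes \<zeta> \<alpha> \<gamma> a :: real and R :: "nat \<Rightarrow> real" and k :: nat and E :: "(nat \<times> nat) set"
  assumes dim: "DIM('a::euclidean_space) \<ge> 2"
    and zeta: "\<zeta> > 0" and alpha: "\<alpha> > 0"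
    and k: "k \<ge> 2" and tree: "is_tree k E"
    and R: "filterlim R at_top sequentially"
    and rho: "(\<exists>c>0. (\<lambda>n. real n * exp (- \<zeta> * (real DIM('a) - 1) * R n / 2)) \<longlonglongrightarrow> c) \<or>
              filterlim (\<lambda>n. real n * exp (- \<zeta> * (real DIM('a) - 1) * R n / 2)) at_top sequentially"
    and gamma: "0 < \<gamma>" "\<gamma> < 1/2"
    and a: "0 < a" "a < 1"
  shows "(\<exists>C. \<forall>\<^sub>F n in sequentially.
            (\<integral>\<^sup>+ u. ennreal ((pD2 \<zeta> \<alpha> \<gamma> k E n (R n) (polar_pt \<zeta> (R n) (fst u)) (polar_pt \<zeta> (R n) (snd (snd u)))
                          * pD2 \<zeta> \<alpha> \<gamma> k E n (R n) (polar_pt \<zeta> (R n) (fst (snd u))) (polar_pt \<zeta> (R n) (snd (snd u))))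
                          powr a)
              \<partial>((outer_meas \<alpha> \<gamma> (R n) :: (real \<times> 'a) measure) \<Otimes>\<^sub>M outer_meas \<alpha> \<gamma> (R n) \<Otimes>\<^sub>M outer_meas \<alpha> \<gamma> (R n)))
            \<le> ennreal (C * exp (- \<zeta> * (real DIM('a) - 1) * (1 - 2 * \<gamma>) * R n)))
       \<and> (\<exists>C. \<forall>\<^sub>F n in sequentially.
            (\<integral>\<^sup>+ u. ennreal ((pD2 \<zeta> \<alpha> \<gamma> k E n (R n) (polar_pt \<zeta> (R n) (fst u)) (polar_pt \<zeta> (R n) (snd u))) powr a)
              \<partial>((outer_meas \<alpha> \<gamma> (R n) :: (real \<times> 'a) measure) \<Otimes>\<^sub>M outer_meas \<alpha> \<gamma> (R n)))
            \<le> ennreal (C * exp (- \<zeta> * (real DIM('a) - 1) * (1 - 2 * \<gamma>) * R n / 2)))"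
proof -
  define K where "K = 2 * 3 ^ DIM('a) * (44 * real k) ^ (DIM('a) - 1)"
  have K: "K \<ge> 0" unfolding K_def by simp
  have d1: "DIM('a) \<ge> 1" using dim by simp
  have ev: "\<forall>\<^sub>F n in sequentially. R n > 0"
    using R unfolding filterlim_at_top_dense by blast
  have cap_n: "cap DIM('a) (4 * real k * (11 * exp (- \<zeta> * (1 - 2 * \<gamma>) * R n / 2)))
      = K * exp (- \<zeta> * (real DIM('a) - 1) * (1 - 2 * \<gamma>) * R n / 2)" for n
    unfolding K_def by (rule cap_eq[OF d1])
  show ?thesis
  proof (intro conjI exI)
    show "\<forall>\<^sub>F n in sequentially.
            (\<integral>\<^sup>+ u. ennreal ((pD2 \<zeta> \<alpha> \<gamma> k E n (R n) (polar_pt \<zeta> (R n) (fst u)) (polar_pt \<zeta> (R n) (snd (snd u)))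
                          * pD2 \<zeta> \<alpha> \<gamma> k E n (R n) (polar_pt \<zeta> (R n) (fst (snd u))) (polar_pt \<zeta> (R n) (snd (snd u))))
                          powr a)
              \<partial>((outer_meas \<alpha> \<gamma> (R n) :: (real \<times> 'a) measure) \<Otimes>\<^sub>M outer_meas \<alpha> \<gamma> (R n) \<Otimes>\<^sub>M outer_meas \<alpha> \<gamma> (R n)))
            \<le> ennreal ((K * K) * exp (- \<zeta> * (real DIM('a) - 1) * (1 - 2 * \<gamma>) * R n))"
      using ev
    proof eventually_elim
      case (elim n)
      let ?x = "exp (- \<zeta> * (real DIM('a) - 1) * (1 - 2 * \<gamma>) * R n / 2)"
      have "ennreal (K * ?x) * ennreal (K * ?x) = ennreal ((K * K) * exp (- \<zeta> * (real DIM('a) - 1) * (1 - 2 * \<gamma>) * R n))"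
      proof -
        have "?x * ?x = exp (- \<zeta> * (real DIM('a) - 1) * (1 - 2 * \<gamma>) * R n)"
          by (simp add: exp_add[symmetric])
        then show ?thesis using K by (simp add: ennreal_mult[symmetric] mult_ac)
      qed
      then show ?case using int3[OF tree k zeta alpha gamma elim a(1), of n, where 'a='a] unfolding cap_n by simp
    qed
    show "\<forall>\<^sub>F n in sequentially.
            (\<integral>\<^sup>+ u. ennreal ((pD2 \<zeta> \<alpha> \<gamma> k E n (R n) (polar_pt \<zeta> (R n) (fst u)) (polar_pt \<zeta> (R n) (snd u))) powr a)
              \<partial>((outer_meas \<alpha> \<gamma> (R n) :: (real \<times> 'a) measure) \<Otimes>\<^sub>M outer_meas \<alpha> \<gamma> (R n)))
            \<le> ennreal (K * exp (- \<zeta> * (real DIM('a) - 1) * (1 - 2 * \<gamma>) * R n / 2))"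
      using ev
    proof eventually_elim
      case (elim n)
      show ?case using int2[OF tree k zeta alpha gamma elim a(1), of n, where 'a='a] unfolding cap_n by simp
    qed
  qed
qed


end
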